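(* Fix $t\in C$ with $t\neq0,\infty$, and let $u\colon M\to X_t=\mathbf P\times\mathbf P$ send each curve of $M$ to its intersection point with $X_t$. In coordinates, $$u(d,a)=\Big(\frac{d-at}{1+a\bar dt},\ \frac{\bar ad-t}{\bar a+\bar dt}\Big).$$ Then: (i) $u$ is surjective; (ii) $u(K)=\Delta_t$ and $u^{-1}(\Delta_t)=K$; (iii) $u$ maps each of $M^+$ and $M^-$ diffeomorphically onto $X_t\setminus\Delta_t$.
   Context: Let $X=\mathbf P^1\times\mathbf P^1\times\mathbf P^1$ with affine coordinates $(x,y,t)$. The third factor is $C$, $X_t$ is the fibre over $t\in C$, and $\Delta_t=\{x=y\}\subset X_t$ is its diagonal. For $d\in\mathbf C$ and $a\in\mathbf C^*$, let $L_{d,a}$ be the curve $x=\frac{d-at}{1+a\bar dt}$, $y=\frac{\bar ad-t}{\bar a+\bar dt}$. For $d=\infty$ and $a\in\mathbf C^*$, let $L_{\infty,a}$ be the curve $x=\frac1{at}$, $y=\frac{\bar a}{t}$. For $d\in\mathbf C\cup\{\infty\}$, let $L_{d,0}$ be the curve $x=d$, $y=-1/\bar d$ (with $-1/\bar0=\infty$, $-1/\bar\infty=0$). Put $C_0=\{d\}\times\mathbf P\times\{0\}$, $C_\infty=\mathbf P\times\{-1/\bar d\}\times\{\infty\}$, $C_0'=\mathbf P\times\{d\}\times\{0\}$ and $C_\infty'=\{-1/\bar d\}\times\mathbf P\times\{\infty\}$. The parameter spaces are: - $M^+$: the family of curves $L_{d,a}$ with $d\in\mathbf C\cup\{\infty\}$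 and $0<|a|<1$, together with their limits $L_{d,0}+C_0+C_\infty$ (parameter $a=0$); - $M^-$: the family of curves $L_{d,a}$ with $|a|>1$, together with their limits $L_{-1/\bar d,0}+C_0'+C_\infty'$ (parameter $a=\infty$); - $K$: the family of curves $L_{d,a}$ with $|a|=1$; - $M=M^+\cup K\cup M^-$. $M$ is a compact connected smooth real $4$-manifold, an $S^2$-bundle over $\mathbf P$ via $d$. It is a connected component of the real locus of the Hilbert scheme of degree-$(1,1,1)$ curves in $X$ meeting the diagonals $\Delta_0$ and $\Delta_\infty$. Locally, $(d,a),(1/d,a),(d,1/a),(1/d,1/a)$ serve as complex coordinates. The point $u(d,0)=(d,-1/\bar d)$ and the point $u(d,\infty)=(-1/\bar d,d)$ are the intersection points of the respective limit curves with $X_t$. *)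

theory Defs
  imports "HOL-Analysis.Analysis"
begin

text \<open>The Riemann sphere P = C \<union> {\<infinity>}: None is the point at infinity.\<close>
type_synonym sphere = "complex option"

text \<open>n/m on the sphere (used only where n and m do not vanish simultaneously).\<close>
definition pfrac :: "complex \<Rightarrow> complex \<Rightarrow> sphere" where
  "pfrac n m = (if m = 0 then None else Some (n / m))"

definition antip :: "sphere \<Rightarrow> sphere" where
  "antip p = (case p of None \<Rightarrow> Some 0 | Some z \<Rightarrow> (if z = 0 then None else Some (- 1 / cnj z)))"

definition pinv :: "sphere \<Rightarrow> complex" where
  "pinv p = (case p of None \<Rightarrow> 0 | Some z \<Rightarrow> 1 / z)"

text \<open>Parameter space M: pairs (d,a) with d, a in the sphere.  a = 0 encodes the limit curves of
  M+, a = \<infinity> the limit curves of M-.\<close>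
type_synonym param = "sphere \<times> sphere"

definition Mplus :: "param set" where
  "Mplus = {(d, Some a) | d a. cmod a < 1}"

definition Mminus :: "param set" where
  "Mminus = {(d, None) | d. True} \<union> {(d, Some a) | d a. cmod a > 1}"

definition Kset :: "param set" where
  "Kset = {(d, Some a) | d a. cmod a = 1}"

definition Diag :: "(sphere \<times> sphere) set" where
  "Diag = {(z, z) | z. True}"

definition uM :: "complex \<Rightarrow> param \<Rightarrow> sphere \<times> sphere" where
  "uM t p = (case p of
      (d, None) \<Rightarrow> (antip d, d)
    | (d, Some a) \<Rightarrow>
        (if a = 0 then (d, antip d)
         else (case d of
                 None \<Rightarrow> (Some (1 / (a * t)), Some (cnj a / t))
               | Some d' \<Rightarrow> (pfrac (d' - a * t) (1 + a * cnj d' * t),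
                             pfrac (cnj a * d' - t) (cnj a + cnj d' * t)))))"

primrec Ck :: "nat \<Rightarrow> 'a::real_normed_vector set \<Rightarrow> ('a \<Rightarrow> 'b::real_normed_vector) \<Rightarrow> bool" where
  "Ck 0 S f = continuous_on S f"
| "Ck (Suc k) S f = (f differentiable_on S \<and>
      (\<forall>v. Ck k S (\<lambda>x. frechet_derivative f (at x) v)))"

definition Cinf_on :: "'a::real_normed_vector set \<Rightarrow> ('a \<Rightarrow> 'b::real_normed_vector) \<Rightarrow> bool" where
  "Cinf_on S f \<longleftrightarrow> open S \<and> (\<forall>k. Ck k S f)"

text \<open>A chart is a pair (U, \<phi>) with \<phi> injective on U with open image; an atlas is a set of charts.
  A map f defined on A is smooth if in all pairs of charts it is C^\<infinity> on an open set.\<close>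
definition smooth_map ::
  "('m set \<times> ('m \<Rightarrow> 'v::real_normed_vector)) set \<Rightarrow> ('n set \<times> ('n \<Rightarrow> 'w::real_normed_vector)) set
   \<Rightarrow> 'm set \<Rightarrow> ('m \<Rightarrow> 'n) \<Rightarrow> bool" where
  "smooth_map AM AN A f \<longleftrightarrow>
     (\<forall>(U, \<phi>) \<in> AM. \<forall>(V, \<psi>) \<in> AN.
        Cinf_on (\<phi> ` (A \<inter> U \<inter> f -` V)) (\<psi> \<circ> f \<circ> inv_into U \<phi>))"

definition diffeo_onto ::
  "('m set \<times> ('m \<Rightarrow> 'v::real_normed_vector)) set \<Rightarrow> ('n set \<times> ('n \<Rightarrow> 'w::real_normed_vector)) set
   \<Rightarrow> 'm set \<Rightarrow> 'n set \<Rightarrow> ('m \<Rightarrow> 'n) \<Rightarrow> bool" where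
  "diffeo_onto AM AN A B f \<longleftrightarrow>
     bij_betw f A B \<and> smooth_map AM AN A f \<and> smooth_map AN AM B (inv_into A f)"

definition X_atlas :: "((sphere \<times> sphere) set \<times> (sphere \<times> sphere \<Rightarrow> complex \<times> complex)) set" where
  "X_atlas =
    {({(Some x, Some y) | x y. True}, \<lambda>(p, q). (the p, the q)),
     ({(p, Some y) | p y. p \<noteq> Some 0}, \<lambda>(p, q). (pinv p, the q)),
     ({(Some x, q) | x q. q \<noteq> Some 0}, \<lambda>(p, q). (the p, pinv q)),
     ({(p, q) | p q. p \<noteq> Some 0 \<and> q \<noteq> Some 0}, \<lambda>(p, q). (pinv p, pinv q))}"

text \<open>Fibre coordinate of M near d = \<infinity>: b = a * conj d / d (and b = a over d = \<infinity>), which is the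
  coordinate making the family of curves (and hence u) continuous across d = \<infinity>.\<close>
definition twist :: "sphere \<Rightarrow> complex" where
  "twist d = (case d of None \<Rightarrow> 1 | Some z \<Rightarrow> cnj z / z)"

definition M_atlas :: "(param set \<times> (param \<Rightarrow> complex \<times> complex)) set" where
  "M_atlas =
    {({(Some d, Some a) | d a. True}, \<lambda>(p, q). (the p, the q)),
     ({(Some d, q) | d q. q \<noteq> Some 0}, \<lambda>(p, q). (the p, pinv q)),
     ({(p, Some a) | p a. p \<noteq> Some 0}, \<lambda>(p, q). (pinv p, the q * twist p)),
     ({(p, q) | p q. p \<noteq> Some 0 \<and> q \<noteq> Some 0}, \<lambda>(p, q). (pinv p, pinv q / twist p))}"

end

theory Submission
  imports Defs
begin

definition smooth :: "'a::real_normed_vector set \<Rightarrow> ('a \<Rightarrow> 'b::real_normed_vector) \<Rightarrow> bool" where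
  "smooth S f \<longleftrightarrow> (\<forall>k. Ck k S f)"

lemma Ck_Suc_imp: "Ck (Suc k) S f \<Longrightarrow> Ck k S f"
proof (induction k arbitrary: f)
  case 0 thus ?case by (simp add: differentiable_imp_continuous_on)
next
  case (Suc k) thus ?case by simp
qed

lemma Ck_cong:
  assumes "open S" "Ck k S f" "\<And>x. x \<in> S \<Longrightarrow> f x = g x"
  shows "Ck k S g"
  using assms(2,3)
proof (induction k arbitrary: f g)
  case 0 thus ?case using continuous_on_cong by (metis Ck.simps(1))
next
  case (Suc k)
  have df: "f differentiable at x" if "x \<in> S" for x
    using Suc.prems(1) that assms(1) by (simp add: differentiable_on_eq_differentiable_at)
  have dg: "g differentiable at x" if "x \<in> S" for x
    using df[OF that] assms(1) that Suc.prems(2)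
    by (meson differentiable_def has_derivative_transform_within_open)
  have fe: "frechet_derivative f (at x) = frechet_derivative g (at x)" if "x \<in> S" for x
    by (rule frechet_derivative_transform_within_open[OF df[OF that] assms(1) that Suc.prems(2)])
  show ?case
  proof (simp, intro conjI allI)
    show "g differentiable_on S" using dg assms(1) by (simp add: differentiable_on_eq_differentiable_at)
    fix v show "Ck k S (\<lambda>x. frechet_derivative g (at x) v)"
      using Suc.IH[of "\<lambda>x. frechet_derivative f (at x) v"] Suc.prems fe by auto
  qed
qed

lemma Ck_SucI:
  assumes "open S" "\<And>x. x \<in> S \<Longrightarrow> (f has_derivative f' x) (at x)"
    "\<And>v. Ck k S (\<lambda>x. f' x v)"
  shows "Ck (Suc k) S f"
proof (simp, intro conjI allI)
  show "f differentiable_on S"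
    using assms(2) by (meson differentiable_at_withinI differentiable_def differentiable_on_def)
  fix v show "Ck k S (\<lambda>x. frechet_derivative f (at x) v)"
    by (rule Ck_cong[OF assms(1) assms(3)[of v]]) (simp add: frechet_derivative_at[OF assms(2)])
qed

lemma Ck_SucD:
  assumes "open S" "Ck (Suc k) S f" "x \<in> S"
  shows "(f has_derivative frechet_derivative f (at x)) (at x)"
  using assms by (simp add: differentiable_on_eq_differentiable_at frechet_derivative_works)

lemma Ck_SucD2:
  assumes "Ck (Suc k) S f"
  shows "Ck k S (\<lambda>x. frechet_derivative f (at x) v)"
  using assms by simp

lemma Ck_const: "open S \<Longrightarrow> Ck k S (\<lambda>x. c)"
proof (induction k arbitrary: c)
  case 0 thus ?case by simp
next
  case (Suc k)
  show ?case by (rule Ck_SucI[where f'="\<lambda>x v. 0"]) (use Suc in auto)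
qed

lemma Ck_linear_comp:
  assumes "bounded_linear L" "open S" "Ck k S f"
  shows "Ck k S (\<lambda>x. L (f x))"
  using assms(3)
proof (induction k arbitrary: f)
  case 0 thus ?case
    using assms(1) by (simp add: bounded_linear.continuous_on[OF assms(1)])
next
  case (Suc k)
  show ?case
  proof (rule Ck_SucI[OF assms(2), where f'="\<lambda>x v. L (frechet_derivative f (at x) v)"])
    fix x assume "x \<in> S"
    thus "((\<lambda>x. L (f x)) has_derivative (\<lambda>v. L (frechet_derivative f (at x) v))) (at x)"
      using Ck_SucD[OF assms(2) Suc.prems] bounded_linear.has_derivative[OF assms(1)] by blast
  next
    fix v show "Ck k S (\<lambda>x. L (frechet_derivative f (at x) v))"
      using Suc by simp
  qed
qed

lemma Ck_add:
  assumes "open S" "Ck k S f" "Ck k S g"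
  shows "Ck k S (\<lambda>x. f x + g x)"
  using assms(2,3)
proof (induction k arbitrary: f g)
  case 0 thus ?case by (simp add: continuous_on_add)
next
  case (Suc k)
  show ?case
  proof (rule Ck_SucI[OF assms(1), where f'="\<lambda>x v. frechet_derivative f (at x) v + frechet_derivative g (at x) v"])
    fix x assume "x \<in> S"
    thus "((\<lambda>x. f x + g x) has_derivative (\<lambda>v. frechet_derivative f (at x) v + frechet_derivative g (at x) v)) (at x)"
      using Ck_SucD[OF assms(1) Suc.prems(1)] Ck_SucD[OF assms(1) Suc.prems(2)] has_derivative_add by blast
  next
    fix v show "Ck k S (\<lambda>x. frechet_derivative f (at x) v + frechet_derivative g (at x) v)"
      using Suc by simp
  qed
qed

lemma Ck_bilinear:
  assumes bb: "bounded_bilinear pr" and "open S" "Ck k S f" "Ck k S g"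
  shows "Ck k S (\<lambda>x. pr (f x) (g x))"
  using assms(3,4)
proof (induction k arbitrary: f g)
  case 0 thus ?case by (simp add: bounded_bilinear.continuous_on[OF bb])
next
  case (Suc k)
  show ?case
  proof (rule Ck_SucI[OF assms(2), where f'="\<lambda>x v. pr (f x) (frechet_derivative g (at x) v) + pr (frechet_derivative f (at x) v) (g x)"])
    fix x assume "x \<in> S"
    thus "((\<lambda>x. pr (f x) (g x)) has_derivative (\<lambda>v. pr (f x) (frechet_derivative g (at x) v) + pr (frechet_derivative f (at x) v) (g x))) (at x)"
      using bounded_bilinear.FDERIV[OF bb Ck_SucD[OF assms(2) Suc.prems(1)] Ck_SucD[OF assms(2) Suc.prems(2)]] by blast
  next
    fix v show "Ck k S (\<lambda>x. pr (f x) (frechet_derivative g (at x) v) + pr (frechet_derivative f (at x) v) (g x))"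
      using Ck_add[OF assms(2) Suc.IH[OF Ck_Suc_imp[OF Suc.prems(1)] Ck_SucD2[OF Suc.prems(2)]]
          Suc.IH[OF Ck_SucD2[OF Suc.prems(1)] Ck_Suc_imp[OF Suc.prems(2)]]] .
  qed
qed

lemma Ck_sum:
  fixes f :: "'i \<Rightarrow> 'a::real_normed_vector \<Rightarrow> 'b::real_normed_vector"
  assumes "open S" "finite I" "\<And>i. i \<in> I \<Longrightarrow> Ck k S (f i)"
  shows "Ck k S (\<lambda>x. \<Sum>i\<in>I. f i x)"
  using assms(2,3)
proof (induction I rule: finite_induct)
  case empty thus ?case by (simp add: Ck_const assms(1))
next
  case (insert i I) thus ?case by (simp add: Ck_add assms(1))
qed

lemma Ck_Pair:
  assumes "open S" "Ck k S f" "Ck k S g"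
  shows "Ck k S (\<lambda>x. (f x, g x))"
  using assms(2,3)
proof (induction k arbitrary: f g)
  case 0 thus ?case by (simp add: continuous_on_Pair)
next
  case (Suc k)
  show ?case
  proof (rule Ck_SucI[OF assms(1), where f'="\<lambda>x v. (frechet_derivative f (at x) v, frechet_derivative g (at x) v)"])
    fix x assume "x \<in> S"
    thus "((\<lambda>x. (f x, g x)) has_derivative (\<lambda>v. (frechet_derivative f (at x) v, frechet_derivative g (at x) v))) (at x)"
      using Ck_SucD[OF assms(1) Suc.prems(1)] Ck_SucD[OF assms(1) Suc.prems(2)] has_derivative_Pair by blast
  next
    fix v show "Ck k S (\<lambda>x. (frechet_derivative f (at x) v, frechet_derivative g (at x) v))"
      using Suc by simp
  qed
qed

lemma linear_basis_expand:
  fixes L :: "'a::euclidean_space \<Rightarrow> 'b::real_normed_vector"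
  assumes "linear L"
  shows "L w = (\<Sum>b\<in>Basis. (w \<bullet> b) *\<^sub>R L b)"
proof -
  have "L w = L (\<Sum>b\<in>Basis. (w \<bullet> b) *\<^sub>R b)" by (simp add: euclidean_representation)
  also have "\<dots> = (\<Sum>b\<in>Basis. (w \<bullet> b) *\<^sub>R L b)"
    using assms by (simp add: linear_sum linear_scale)
  finally show ?thesis .
qed

lemma Ck_compose:
  fixes g :: "'b::euclidean_space \<Rightarrow> 'c::real_normed_vector"
  assumes "open S" "open T" "smooth T g" "Ck k S f" "f ` S \<subseteq> T"
  shows "Ck k S (\<lambda>x. g (f x))"
  using assms(3,4,5)
proof (induction k arbitrary: f g)
  case 0
  have gc: "continuous_on T g" using 0(1) unfolding smooth_def by (metis Ck.simps(1))
  have fc: "continuous_on S f" using 0(2) by simp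
  show ?case using continuous_on_compose2[OF gc fc 0(3)] by simp
next
  case (Suc k)
  have gT: "Ck (Suc k') T g" for k' using Suc.prems(1) unfolding smooth_def by blast
  have dg: "(g has_derivative frechet_derivative g (at y)) (at y)" if "y \<in> T" for y
    using Ck_SucD[OF assms(2) gT that] .
  have fS: "f x \<in> T" if "x \<in> S" for x using Suc.prems(3) that by blast
  show ?case
  proof (rule Ck_SucI[OF assms(1), where f'="\<lambda>x v. frechet_derivative g (at (f x)) (frechet_derivative f (at x) v)"])
    fix x assume x: "x \<in> S"
    have "((g \<circ> f) has_derivative (frechet_derivative g (at (f x)) \<circ> frechet_derivative f (at x))) (at x)"
      by (rule diff_chain_at[OF Ck_SucD[OF assms(1) Suc.prems(2) x] dg[OF fS[OF x]]])
    thus "((\<lambda>x. g (f x)) has_derivative (\<lambda>v. frechet_derivative g (at (f x)) (frechet_derivative f (at x) v))) (at x)"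
      by (simp add: o_def)
  next
    fix v
    have lin: "linear (frechet_derivative g (at y))" if "y \<in> T" for y
      using dg[OF that] has_derivative_linear by blast
    have fk: "Ck k S f" using Ck_Suc_imp[OF Suc.prems(2)] .
    have "Ck k S (\<lambda>x. frechet_derivative f (at x) v \<bullet> b)" for b
      using Ck_linear_comp[OF bounded_linear_inner_left assms(1) Ck_SucD2[OF Suc.prems(2)]] .
    moreover have "Ck k S (\<lambda>x. frechet_derivative g (at (f x)) b)" for b
    proof -
      have "smooth T (\<lambda>y. frechet_derivative g (at y) b)"
        unfolding smooth_def using gT Ck_SucD2 by blast
      thus ?thesis using Suc.IH fk Suc.prems(3) by blast
    qed
    ultimately have "Ck k S (\<lambda>x. (frechet_derivative f (at x) v \<bullet> b) *\<^sub>R frechet_derivative g (at (f x)) b)" for b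
      using Ck_bilinear[OF bounded_bilinear_scaleR assms(1)] by blast
    hence "Ck k S (\<lambda>x. \<Sum>b\<in>Basis. (frechet_derivative f (at x) v \<bullet> b) *\<^sub>R frechet_derivative g (at (f x)) b)"
      using Ck_sum[OF assms(1) finite_Basis, of k "\<lambda>b x. (frechet_derivative f (at x) v \<bullet> b) *\<^sub>R frechet_derivative g (at (f x)) b"] by blast
    thus "Ck k S (\<lambda>x. frechet_derivative g (at (f x)) (frechet_derivative f (at x) v))"
    proof (rule Ck_cong[OF assms(1)])
      fix x assume "x \<in> S"
      hence "linear (frechet_derivative g (at (f x)))" using lin fS by blast
      from linear_basis_expand[OF this, of "frechet_derivative f (at x) v"]
      show "(\<Sum>b\<in>Basis. (frechet_derivative f (at x) v \<bullet> b) *\<^sub>R frechet_derivative g (at (f x)) b)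
          = frechet_derivative g (at (f x)) (frechet_derivative f (at x) v)" by simp
    qed
  qed
qed

lemma smooth_inverse: "smooth (-{0}) (inverse :: complex \<Rightarrow> complex)"
  unfolding smooth_def
proof
  fix k show "Ck k (-{0}) (inverse :: complex \<Rightarrow> complex)"
  proof (induction k)
    case 0 thus ?case by (simp add: continuous_on_inverse continuous_on_id)
  next
    case (Suc k)
    show ?case
    proof (rule Ck_SucI[where f'="\<lambda>x h. - (inverse x * h * inverse x)"])
      show "open (- {0::complex})" by auto
      fix x :: complex assume "x \<in> -{0}"
      thus "(inverse has_derivative (\<lambda>h. - (inverse x * h * inverse x))) (at x)"
        by (intro has_derivative_inverse') auto
    next
      fix v :: complex
      have "Ck k (-{0}) (\<lambda>x. - (inverse x * v * inverse x))"
        by (intro Ck_linear_comp[OF bounded_linear_minus[OF bounded_linear_ident]]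
              Ck_bilinear[OF bounded_bilinear_mult] Ck_const Suc) auto
      thus "Ck k (-{0}) (\<lambda>x. - (inverse x * v * inverse x))" .
    qed
  qed
qed

lemma Ck_linear:
  assumes "bounded_linear L" "open S" shows "Ck k S L"
proof (cases k)
  case 0 thus ?thesis using assms by (simp add: linear_continuous_on)
next
  case (Suc j)
  show ?thesis unfolding Suc
    by (rule Ck_SucI[OF assms(2), where f'="\<lambda>x v. L v"])
       (use assms in \<open>auto intro: bounded_linear_imp_has_derivative Ck_const\<close>)
qed

lemma Ck_fst: "open S \<Longrightarrow> Ck k S (\<lambda>z. fst z)"
  by (rule Ck_linear[OF bounded_linear_fst])

lemma Ck_snd: "open S \<Longrightarrow> Ck k S (\<lambda>z. snd z)"
  by (rule Ck_linear[OF bounded_linear_snd])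

lemma Ck_const': "open S \<Longrightarrow> Ck k S (\<lambda>z. c)"
  by (rule Ck_const)

lemma Ck_cnj: "open S \<Longrightarrow> Ck k S f \<Longrightarrow> Ck k S (\<lambda>z. cnj (f z))"
  by (rule Ck_linear_comp[OF bounded_linear_cnj])

lemma Ck_add': "open S \<Longrightarrow> Ck k S f \<Longrightarrow> Ck k S g \<Longrightarrow> Ck k S (\<lambda>z. f z + g z)"
  by (rule Ck_add)

lemma Ck_uminus: "open S \<Longrightarrow> Ck k S f \<Longrightarrow> Ck k S (\<lambda>z. - f z)"
  by (rule Ck_linear_comp[OF bounded_linear_minus[OF bounded_linear_ident]])

lemma Ck_diff:
  assumes "open S" "Ck k S f" "Ck k S g" shows "Ck k S (\<lambda>z. f z - g z)"
  using Ck_add[OF assms(1,2) Ck_uminus[OF assms(1,3)]] by simp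

lemma Ck_mult: "open S \<Longrightarrow> Ck k S f \<Longrightarrow> Ck k S g \<Longrightarrow> Ck k S (\<lambda>z. f z * g z :: 'a::real_normed_algebra)"
  by (rule Ck_bilinear[OF bounded_bilinear_mult])

lemma Ck_Pair': "open S \<Longrightarrow> Ck k S f \<Longrightarrow> Ck k S g \<Longrightarrow> Ck k S (\<lambda>z. (f z, g z))"
  by (rule Ck_Pair)

lemma Ck_inverse:
  fixes f :: "'a::real_normed_vector \<Rightarrow> complex"
  assumes "open S" "Ck k S f" "\<And>x. x \<in> S \<Longrightarrow> f x \<noteq> 0"
  shows "Ck k S (\<lambda>z. inverse (f z))"
  by (rule Ck_compose[OF assms(1) _ smooth_inverse assms(2)]) (use assms(3) in auto)

lemma Ck_divide:
  fixes f :: "'a::real_normed_vector \<Rightarrow> complex"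
  assumes "open S" "Ck k S f" "Ck k S g" "\<And>x. x \<in> S \<Longrightarrow> g x \<noteq> 0"
  shows "Ck k S (\<lambda>z. f z / g z)"
  using Ck_mult[OF assms(1,2) Ck_inverse[OF assms(1,3,4)]] by (simp add: divide_inverse)

lemmas Ck_intros = Ck_fst Ck_snd Ck_const' Ck_cnj Ck_add' Ck_uminus Ck_diff Ck_mult Ck_Pair' Ck_inverse Ck_divide

lemma smooth_inv:
  fixes F :: "'a::euclidean_space \<Rightarrow> 'a"
  assumes S: "open S" and sm: "smooth S F" and inj: "inj_on F S"
    and rinv: "\<And>x v. x \<in> S \<Longrightarrow> frechet_derivative F (at x) (G x v) = v"
    and smG: "\<And>v. smooth S (\<lambda>x. G x v)"
  shows "open (F ` S) \<and> smooth (F ` S) (inv_into S F)"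
proof -
  have Fk: "Ck k S F" for k using sm by (simp add: smooth_def)
  have cont: "continuous_on S F" using Fk[of 0] by simp
  have opn: "open (F ` S)" by (rule invariance_of_domain[OF cont S inj])
  define g where "g = inv_into S F"
  have gF: "g (F x) = x" if "x \<in> S" for x using inj that by (simp add: g_def)
  have dF: "(F has_derivative frechet_derivative F (at x)) (at x)" if "x \<in> S" for x
    using Ck_SucD[OF S Fk that] .
  have dg0: "(g has_derivative G x) (at (F x))" if "x \<in> S" for x
    by (rule has_derivative_inverse_on[OF S dF gF _ that]) (auto simp: rinv that)
  have dg: "(g has_derivative G (g y)) (at y)" if "y \<in> F ` S" for y
    using that dg0 gF by auto
  have gS: "g ` (F ` S) \<subseteq> S" using gF by auto
  have "Ck k (F ` S) g" for k
  proof (induction k)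
    case 0
    have "isCont g y" if "y \<in> F ` S" for y using dg[OF that] has_derivative_continuous by blast
    thus ?case by (simp add: continuous_at_imp_continuous_on)
  next
    case (Suc k)
    show ?case
    proof (rule Ck_SucI[OF opn dg])
      fix v show "Ck k (F ` S) (\<lambda>x. G (g x) v)"
        by (rule Ck_compose[OF opn S smG Suc gS])
    qed
  qed
  thus ?thesis using opn by (simp add: smooth_def g_def)
qed

lemma pfrac_eq:
  assumes "n \<noteq> 0 \<or> d \<noteq> 0" "n' \<noteq> 0 \<or> d' \<noteq> 0"
  shows "(pfrac n d = pfrac n' d') = (n * d' = n' * d)"
  using assms by (auto simp: pfrac_def field_simps)

lemma Some_pfrac: "Some x = pfrac x 1" by (simp add: pfrac_def)
lemma None_pfrac: "None = pfrac 1 0" by (simp add: pfrac_def)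
lemma antip_Some: "antip (Some z) = pfrac (-1) (cnj z)" by (simp add: antip_def pfrac_def)
lemma antip_None: "antip None = pfrac 0 1" by (simp add: antip_def pfrac_def)

lemma cnj_sq_real: "z * cnj z = of_real ((cmod z)^2)"
  by (metis complex_norm_square)

lemma one_plus_sq_ne0: "1 + (a * cnj a) * (t * cnj t) \<noteq> 0"
proof -
  have "1 + (a * cnj a) * (t * cnj t) = of_real (1 + (cmod a)^2 * (cmod t)^2)"
    by (simp add: cnj_sq_real)
  moreover have "1 + (cmod a)^2 * (cmod t)^2 > 0" by (simp add: add_pos_nonneg)
  ultimately show ?thesis by (metis of_real_eq_0_iff less_irrefl)
qed

lemma t_one_plus_ne0: "t \<noteq> 0 \<Longrightarrow> t * (1 + w * cnj w) \<noteq> 0"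
proof -
  have "1 + w * cnj w = of_real (1 + (cmod w)^2)" by (simp add: cnj_sq_real)
  moreover have "1 + (cmod w)^2 > 0" by (simp add: add_pos_nonneg)
  ultimately show "t \<noteq> 0 \<Longrightarrow> t * (1 + w * cnj w) \<noteq> 0" by (metis mult_eq_0_iff of_real_eq_0_iff less_irrefl)
qed

definition xN1 :: "complex \<Rightarrow> complex \<times> complex \<Rightarrow> complex" where "xN1 t z = fst z - snd z * t"
definition xD1 :: "complex \<Rightarrow> complex \<times> complex \<Rightarrow> complex" where "xD1 t z = 1 + snd z * cnj (fst z) * t"
definition yN1 :: "complex \<Rightarrow> complex \<times> complex \<Rightarrow> complex" where "yN1 t z = cnj (snd z) * fst z - t"
definition yD1 :: "complex \<Rightarrow> complex \<times> complex \<Rightarrow> complex" where "yD1 t z = cnj (snd z) + cnj (fst z) * t"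

definition xN2 :: "complex \<Rightarrow> complex \<times> complex \<Rightarrow> complex" where "xN2 t z = snd z * fst z - t"
definition xD2 :: "complex \<Rightarrow> complex \<times> complex \<Rightarrow> complex" where "xD2 t z = snd z + cnj (fst z) * t"
definition yN2 :: "complex \<Rightarrow> complex \<times> complex \<Rightarrow> complex" where "yN2 t z = fst z - t * cnj (snd z)"
definition yD2 :: "complex \<Rightarrow> complex \<times> complex \<Rightarrow> complex" where "yD2 t z = 1 + cnj (snd z) * cnj (fst z) * t"

definition xN3 :: "complex \<Rightarrow> complex \<times> complex \<Rightarrow> complex" where "xN3 t z = 1 - snd z * cnj (fst z) * t"
definition xD3 :: "complex \<Rightarrow> complex \<times> complex \<Rightarrow> complex" where "xD3 t z = fst z + snd z * t"
definition yN3 :: "complex \<Rightarrow> complex \<times> complex \<Rightarrow> complex" where "yN3 t z = cnj (snd z) - t * cnj (fst z)"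
definition yD3 :: "complex \<Rightarrow> complex \<times> complex \<Rightarrow> complex" where "yD3 t z = cnj (snd z) * fst z + t"

definition xN4 :: "complex \<Rightarrow> complex \<times> complex \<Rightarrow> complex" where "xN4 t z = snd z - cnj (fst z) * t"
definition xD4 :: "complex \<Rightarrow> complex \<times> complex \<Rightarrow> complex" where "xD4 t z = snd z * fst z + t"
definition yN4 :: "complex \<Rightarrow> complex \<times> complex \<Rightarrow> complex" where "yN4 t z = 1 - t * cnj (fst z) * cnj (snd z)"
definition yD4 :: "complex \<Rightarrow> complex \<times> complex \<Rightarrow> complex" where "yD4 t z = fst z + t * cnj (snd z)"

lemmas chart_defs = xN1_def xD1_def yN1_def yD1_def xN2_def xD2_def yN2_def yD2_def
  xN3_def xD3_def yN3_def yD3_def xN4_def xD4_def yN4_def yD4_def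

lemma nd1: assumes "t \<noteq> 0"
  shows "xN1 t z \<noteq> 0 \<or> xD1 t z \<noteq> 0" "yN1 t z \<noteq> 0 \<or> yD1 t z \<noteq> 0"
proof -
  obtain d a where z: "z = (d, a)" by fastforce
  show "xN1 t z \<noteq> 0 \<or> xD1 t z \<noteq> 0"
  proof (rule ccontr)
    assume "\<not> ?thesis"
    hence "d = a * t" "1 + a * cnj d * t = 0" by (auto simp: z xN1_def xD1_def)
    thus False using one_plus_sq_ne0[of a t] by (simp add: algebra_simps)
  qed
  show "yN1 t z \<noteq> 0 \<or> yD1 t z \<noteq> 0"
  proof (rule ccontr)
    assume "\<not> ?thesis"
    hence h: "yN1 t z = 0" "yD1 t z = 0" by auto
    have e1: "cnj a * d = t" using h(1) by (simp add: z yN1_def)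
    have e2: "cnj d * t = - cnj a" using h(2) by (simp add: z yD1_def add_eq_0_iff)
    have "t * (1 + d * cnj d) = t + d * (cnj d * t)" by (simp add: algebra_simps)
    also have "\<dots> = 0" using e1 e2 by (simp add: algebra_simps)
    finally show False using t_one_plus_ne0[OF assms, of d] by simp
  qed
qed


lemma nd2: assumes "t \<noteq> 0"
  shows "xN2 t z \<noteq> 0 \<or> xD2 t z \<noteq> 0" "yN2 t z \<noteq> 0 \<or> yD2 t z \<noteq> 0"
proof -
  obtain d c where z: "z = (d, c)" by fastforce
  show "xN2 t z \<noteq> 0 \<or> xD2 t z \<noteq> 0"
  proof (rule ccontr)
    assume "\<not> ?thesis"
    hence h: "xN2 t z = 0" "xD2 t z = 0" by auto
    have e1: "c * d = t" using h(1) by (simp add: z xN2_def)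
    have e2: "cnj d * t = - c" using h(2) by (simp add: z xD2_def add_eq_0_iff)
    have "t * (1 + d * cnj d) = t + d * (cnj d * t)" by (simp add: algebra_simps)
    also have "\<dots> = 0" using e1 e2 by (simp add: algebra_simps)
    finally show False using t_one_plus_ne0[OF assms, of d] by simp
  qed
  show "yN2 t z \<noteq> 0 \<or> yD2 t z \<noteq> 0"
  proof (rule ccontr)
    assume "\<not> ?thesis"
    hence "d = t * cnj c" "1 + cnj c * cnj d * t = 0" by (auto simp: z yN2_def yD2_def)
    thus False using one_plus_sq_ne0[of "cnj c" t] by (simp add: algebra_simps)
  qed
qed

lemma nd3: assumes "t \<noteq> 0"
  shows "xN3 t z \<noteq> 0 \<or> xD3 t z \<noteq> 0" "yN3 t z \<noteq> 0 \<or> yD3 t z \<noteq> 0"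
proof -
  obtain w b where z: "z = (w, b)" by fastforce
  show "xN3 t z \<noteq> 0 \<or> xD3 t z \<noteq> 0"
  proof (rule ccontr)
    assume "\<not> ?thesis"
    hence h: "xN3 t z = 0" "xD3 t z = 0" by auto
    have e1: "b * cnj w * t = 1" using h(1) by (simp add: z xN3_def)
    have e2: "w = - (b * t)" using h(2) by (simp add: z xD3_def add_eq_0_iff)
    have "1 + (b * cnj b) * (t * cnj t) = 1 - b * cnj w * t" using e2 by (simp add: algebra_simps)
    also have "\<dots> = 0" using e1 by simp
    finally show False using one_plus_sq_ne0[of b t] by simp
  qed
  show "yN3 t z \<noteq> 0 \<or> yD3 t z \<noteq> 0"
  proof (rule ccontr)
    assume "\<not> ?thesis"
    hence h: "yN3 t z = 0" "yD3 t z = 0" by auto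
    have e1: "cnj b = t * cnj w" using h(1) by (simp add: z yN3_def)
    have e2: "cnj b * w = - t" using h(2) by (simp add: z yD3_def add_eq_0_iff)
    have "t * (1 + w * cnj w) = t + cnj b * w" using e1 by (simp add: algebra_simps)
    also have "\<dots> = 0" using e2 by simp
    finally show False using t_one_plus_ne0[OF assms, of w] by simp
  qed
qed

lemma nd4: assumes "t \<noteq> 0"
  shows "xN4 t z \<noteq> 0 \<or> xD4 t z \<noteq> 0" "yN4 t z \<noteq> 0 \<or> yD4 t z \<noteq> 0"
proof -
  obtain w c where z: "z = (w, c)" by fastforce
  show "xN4 t z \<noteq> 0 \<or> xD4 t z \<noteq> 0"
  proof (rule ccontr)
    assume "\<not> ?thesis"
    hence h: "xN4 t z = 0" "xD4 t z = 0" by auto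
    have e1: "c = cnj w * t" using h(1) by (simp add: z xN4_def)
    have e2: "c * w = - t" using h(2) by (simp add: z xD4_def add_eq_0_iff)
    have "t * (1 + w * cnj w) = t + c * w" using e1 by (simp add: algebra_simps)
    also have "\<dots> = 0" using e2 by simp
    finally show False using t_one_plus_ne0[OF assms, of w] by simp
  qed
  show "yN4 t z \<noteq> 0 \<or> yD4 t z \<noteq> 0"
  proof (rule ccontr)
    assume "\<not> ?thesis"
    hence h: "yN4 t z = 0" "yD4 t z = 0" by auto
    have e1: "t * cnj w * cnj c = 1" using h(1) by (simp add: z yN4_def)
    have e2: "w = - (t * cnj c)" using h(2) by (simp add: z yD4_def add_eq_0_iff)
    have "1 + (c * cnj c) * (t * cnj t) = 1 - t * cnj w * cnj c" using e2 by (simp add: algebra_simps)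
    also have "\<dots> = 0" using e1 by simp
    finally show False using one_plus_sq_ne0[of c t] by simp
  qed
qed


lemma pair_pfrac_eq:
  assumes "a \<noteq> 0 \<or> b \<noteq> 0" "c \<noteq> 0 \<or> d \<noteq> 0" "a' \<noteq> 0 \<or> b' \<noteq> 0" "c' \<noteq> 0 \<or> d' \<noteq> 0"
    "a * b' = a' * b" "c * d' = c' * d"
  shows "(pfrac a b, pfrac c d) = (pfrac a' b', pfrac c' d')"
  using assms pfrac_eq by simp

lemma u_SS: "a \<noteq> 0 \<Longrightarrow> uM t (Some d, Some a) =
   (pfrac (xN1 t (d,a)) (xD1 t (d,a)), pfrac (yN1 t (d,a)) (yD1 t (d,a)))"
  by (simp add: uM_def chart_defs)

definition pii :: "complex \<Rightarrow> sphere" where "pii x = (if x = 0 then None else Some (1 / x))"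

lemma pinv_pii[simp]: "pinv (pii x) = x" by (simp add: pii_def pinv_def)
lemma pii_ne0[simp]: "pii x \<noteq> Some 0" by (simp add: pii_def)
lemma pii_pinv: "p \<noteq> Some 0 \<Longrightarrow> pii (pinv p) = p"
  by (cases p) (auto simp: pii_def pinv_def)
lemma twist_ne0: "p \<noteq> Some 0 \<Longrightarrow> twist p \<noteq> 0"
  by (cases p) (auto simp: twist_def)
lemma twist_pii: "x \<noteq> 0 \<Longrightarrow> twist (pii x) = x / cnj x"
  by (simp add: twist_def pii_def)
lemma twist_pii0: "twist (pii 0) = 1"
  by (simp add: twist_def pii_def)

definition io1 :: "complex \<times> complex \<Rightarrow> param" where "io1 z = (Some (fst z), Some (snd z))"
definition io2 :: "complex \<times> complex \<Rightarrow> param" where "io2 z = (Some (fst z), pii (snd z))"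
definition io3 :: "complex \<times> complex \<Rightarrow> param" where
  "io3 z = (pii (fst z), Some (snd z / twist (pii (fst z))))"
definition io4 :: "complex \<times> complex \<Rightarrow> param" where
  "io4 z = (pii (fst z), pii (snd z * twist (pii (fst z))))"

lemma urep1: assumes t: "t \<noteq> 0"
  shows "uM t (io1 z) = (pfrac (xN1 t z) (xD1 t z), pfrac (yN1 t z) (yD1 t z))"
proof -
  obtain d a where z: "z = (d, a)" by fastforce
  show ?thesis
  proof (cases "a = 0")
    case True
    have "uM t (io1 z) = (Some d, antip (Some d))" by (simp add: uM_def io1_def z True)
      also have "\<dots> = (pfrac (xN1 t z) (xD1 t z), pfrac (yN1 t z) (yD1 t z))"
      unfolding antip_Some unfolding Some_pfrac
      by (rule pair_pfrac_eq) (use t nd1[OF t, of z] in \<open>auto simp: z True chart_defs\<close>)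
      finally show ?thesis .
  next
    case False thus ?thesis by (simp add: io1_def z u_SS)
  qed
qed

lemma urep2: assumes t: "t \<noteq> 0"
  shows "uM t (io2 z) = (pfrac (xN2 t z) (xD2 t z), pfrac (yN2 t z) (yD2 t z))"
proof -
  obtain d c where z: "z = (d, c)" by fastforce
  show ?thesis
  proof (cases "c = 0")
    case True
    have "uM t (io2 z) = (antip (Some d), Some d)" by (simp add: uM_def io2_def z True pii_def)
      also have "\<dots> = (pfrac (xN2 t z) (xD2 t z), pfrac (yN2 t z) (yD2 t z))"
      unfolding antip_Some unfolding Some_pfrac
      by (rule pair_pfrac_eq) (use t nd2[OF t, of z] in \<open>auto simp: z True chart_defs\<close>)
      finally show ?thesis .
  next
    case False
    have "uM t (io2 z) = (pfrac (xN1 t (d,1/c)) (xD1 t (d,1/c)), pfrac (yN1 t (d,1/c)) (yD1 t (d,1/c)))"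
      using False by (simp add: io2_def z u_SS pii_def)
    also have "\<dots> = (pfrac (xN2 t z) (xD2 t z), pfrac (yN2 t z) (yD2 t z))"
      by (rule pair_pfrac_eq) (use t nd1[OF t] nd2[OF t] False in \<open>auto simp: z chart_defs field_simps\<close>)
    finally show ?thesis .
  qed
qed

lemma urep3: assumes t: "t \<noteq> 0"
  shows "uM t (io3 z) = (pfrac (xN3 t z) (xD3 t z), pfrac (yN3 t z) (yD3 t z))"
proof -
  obtain w b where z: "z = (w, b)" by fastforce
  show ?thesis
  proof (cases "w = 0")
    case True
    show ?thesis
    proof (cases "b = 0")
      case True
      thus ?thesis using \<open>w = 0\<close> t by (simp add: uM_def io3_def z pii_def twist_def antip_def chart_defs pfrac_def)
    next
      case False
      thus ?thesis using \<open>w = 0\<close> t by (simp add: uM_def io3_def z pii_def twist_def chart_defs pfrac_def)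
    qed
  next
    case False
    hence io: "io3 z = (Some (1/w), Some (b * cnj w / w))"
      by (simp add: io3_def z twist_pii) (simp add: pii_def)
    show ?thesis
    proof (cases "b = 0")
      case True
      have "uM t (io3 z) = (Some (1/w), antip (Some (1/w)))" by (simp add: uM_def io True)
        also have "\<dots> = (pfrac (xN3 t z) (xD3 t z), pfrac (yN3 t z) (yD3 t z))"
        unfolding antip_Some unfolding Some_pfrac
        by (rule pair_pfrac_eq) (use t nd3[OF t, of z] \<open>w \<noteq> 0\<close> in \<open>auto simp: z True chart_defs field_simps\<close>)
        finally show ?thesis .
    next
      case b: False
      have "uM t (io3 z) = (pfrac (xN1 t (1/w, b * cnj w / w)) (xD1 t (1/w, b * cnj w / w)),
          pfrac (yN1 t (1/w, b * cnj w / w)) (yD1 t (1/w, b * cnj w / w)))"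
        using b \<open>w \<noteq> 0\<close> by (simp add: io u_SS)
      also have "\<dots> = (pfrac (xN3 t z) (xD3 t z), pfrac (yN3 t z) (yD3 t z))"
        by (rule pair_pfrac_eq[OF nd1(1)[OF t] nd1(2)[OF t] nd3(1)[OF t] nd3(2)[OF t]]) (use t b \<open>w \<noteq> 0\<close> in \<open>auto simp: z chart_defs field_simps\<close>)
      finally show ?thesis .
    qed
  qed
qed

lemma urep4: assumes t: "t \<noteq> 0"
  shows "uM t (io4 z) = (pfrac (xN4 t z) (xD4 t z), pfrac (yN4 t z) (yD4 t z))"
proof -
  obtain w c where z: "z = (w, c)" by fastforce
  show ?thesis
  proof (cases "w = 0")
    case True
    show ?thesis
    proof (cases "c = 0")
      case True
      thus ?thesis using \<open>w = 0\<close> t by (simp add: uM_def io4_def z pii_def twist_def antip_def chart_defs pfrac_def)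
    next
      case False
      thus ?thesis using \<open>w = 0\<close> t by (simp add: uM_def io4_def z pii_def twist_def chart_defs pfrac_def)
    qed
  next
    case False
    show ?thesis
    proof (cases "c = 0")
      case True
      have io: "io4 z = (Some (1/w), None)"
        using True \<open>w \<noteq> 0\<close> by (simp add: io4_def z pii_def)
      have "uM t (io4 z) = (antip (Some (1/w)), Some (1/w))" by (simp add: uM_def io)
        also have "\<dots> = (pfrac (xN4 t z) (xD4 t z), pfrac (yN4 t z) (yD4 t z))"
        unfolding antip_Some unfolding Some_pfrac
        by (rule pair_pfrac_eq) (use t nd4[OF t, of z] \<open>w \<noteq> 0\<close> in \<open>auto simp: z True chart_defs field_simps\<close>)
        finally show ?thesis .
    next
      case c: False
      have io: "io4 z = (Some (1/w), Some (cnj w / (c * w)))"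
        using c \<open>w \<noteq> 0\<close> by (simp add: io4_def z twist_pii) (simp add: pii_def)
      have "uM t (io4 z) = (pfrac (xN1 t (1/w, cnj w / (c * w))) (xD1 t (1/w, cnj w / (c * w))),
          pfrac (yN1 t (1/w, cnj w / (c * w))) (yD1 t (1/w, cnj w / (c * w))))"
        using c \<open>w \<noteq> 0\<close> by (simp add: io u_SS)
      also have "\<dots> = (pfrac (xN4 t z) (xD4 t z), pfrac (yN4 t z) (yD4 t z))"
        by (rule pair_pfrac_eq[OF nd1(1)[OF t] nd1(2)[OF t] nd4(1)[OF t] nd4(2)[OF t]]) (use t c \<open>w \<noteq> 0\<close> in \<open>auto simp: z chart_defs field_simps\<close>)
      finally show ?thesis .
    qed
  qed
qed

definition fr :: "bool \<Rightarrow> complex \<Rightarrow> complex \<Rightarrow> complex" where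
  "fr e n d = (if e then d / n else n / d)"
definition cnd :: "bool \<Rightarrow> complex \<Rightarrow> complex \<Rightarrow> bool" where
  "cnd e n d = (if e then n \<noteq> 0 else d \<noteq> 0)"
definition mlt :: "bool \<Rightarrow> complex \<Rightarrow> complex \<Rightarrow> complex" where
  "mlt e n d = (if e then - (n * n) else d * d)"

lemma fr_deriv:
  assumes "(N has_derivative dN) (at z)" "(D has_derivative dD) (at z)" "cnd e (N z) (D z)"
  shows "((\<lambda>z. fr e (N z) (D z)) has_derivative
     (\<lambda>h. (D z * dN h - N z * dD h) / mlt e (N z) (D z))) (at z)"
proof (cases e)
  case True
  hence nz: "N z \<noteq> 0" using assms(3) by (simp add: cnd_def)
  have "((\<lambda>z. D z / N z) has_derivative (\<lambda>h. - D z * (inverse (N z) * dN h * inverse (N z)) + dD h / N z)) (at z)"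
    using has_derivative_divide[OF assms(2) assms(1) nz] .
  moreover have "(\<lambda>h. - D z * (inverse (N z) * dN h * inverse (N z)) + dD h / N z)
     = (\<lambda>h. (D z * dN h - N z * dD h) / mlt e (N z) (D z))"
    using nz True by (auto simp: mlt_def field_simps)
  ultimately show ?thesis using True by (simp add: fr_def)
next
  case False
  hence nz: "D z \<noteq> 0" using assms(3) by (simp add: cnd_def)
  have "((\<lambda>z. N z / D z) has_derivative (\<lambda>h. - N z * (inverse (D z) * dD h * inverse (D z)) + dN h / D z)) (at z)"
    using has_derivative_divide[OF assms(1) assms(2) nz] .
  moreover have "(\<lambda>h. - N z * (inverse (D z) * dD h * inverse (D z)) + dN h / D z)
     = (\<lambda>h. (D z * dN h - N z * dD h) / mlt e (N z) (D z))"
    using nz False by (auto simp: mlt_def field_simps)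
  ultimately show ?thesis using False by (simp add: fr_def)
qed

lemma fr_Ck:
  assumes "open S" "Ck k S N" "Ck k S D" "\<And>z. z \<in> S \<Longrightarrow> cnd e (N z) (D z)"
  shows "Ck k S (\<lambda>z. fr e (N z) (D z))"
proof (cases e)
  case True thus ?thesis using assms by (simp add: fr_def cnd_def Ck_divide)
next
  case False thus ?thesis using assms by (simp add: fr_def cnd_def Ck_divide)
qed

locale cdata =
  fixes N1 D1 N2 D2 :: "complex \<times> complex \<Rightarrow> complex"
    and dN1 dD1 dN2 dD2 :: "complex \<times> complex \<Rightarrow> complex \<times> complex \<Rightarrow> complex"
    and Wi :: "complex \<times> complex \<Rightarrow> complex \<times> complex \<Rightarrow> complex \<times> complex"
    and R :: "(complex \<times> complex) set"
  assumes R_open: "open R"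
    and smN1: "\<And>S k. open S \<Longrightarrow> Ck k S N1" and smD1: "\<And>S k. open S \<Longrightarrow> Ck k S D1"
    and smN2: "\<And>S k. open S \<Longrightarrow> Ck k S N2" and smD2: "\<And>S k. open S \<Longrightarrow> Ck k S D2"
    and hN1: "\<And>z. (N1 has_derivative dN1 z) (at z)" and hD1: "\<And>z. (D1 has_derivative dD1 z) (at z)"
    and hN2: "\<And>z. (N2 has_derivative dN2 z) (at z)" and hD2: "\<And>z. (D2 has_derivative dD2 z) (at z)"
    and Wi_smooth: "\<And>S k P. open S \<Longrightarrow> S \<subseteq> R \<Longrightarrow> Ck k S P \<Longrightarrow> Ck k S (\<lambda>z. Wi z (P z))"
    and Wi_rinv: "\<And>z p. z \<in> R \<Longrightarrow>
       (D1 z * dN1 z (Wi z p) - N1 z * dD1 z (Wi z p), D2 z * dN2 z (Wi z p) - N2 z * dD2 z (Wi z p)) = p"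
begin

definition SS :: "bool \<Rightarrow> bool \<Rightarrow> (complex \<times> complex) set" where
  "SS e1 e2 = {z \<in> R. cnd e1 (N1 z) (D1 z) \<and> cnd e2 (N2 z) (D2 z)}"

definition FF :: "bool \<Rightarrow> bool \<Rightarrow> complex \<times> complex \<Rightarrow> complex \<times> complex" where
  "FF e1 e2 z = (fr e1 (N1 z) (D1 z), fr e2 (N2 z) (D2 z))"

lemma cont_UNIV: "continuous_on UNIV N1" "continuous_on UNIV D1" "continuous_on UNIV N2" "continuous_on UNIV D2"
  using smN1[of UNIV 0] smD1[of UNIV 0] smN2[of UNIV 0] smD2[of UNIV 0] by auto

lemma open_cnd: "open {z. cnd e (N1 z) (D1 z)}" "open {z. cnd e (N2 z) (D2 z)}"
  by (cases e; simp add: cnd_def open_Collect_neq cont_UNIV continuous_on_const)+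

lemma SS_open: "open (SS e1 e2)"
proof -
  have "SS e1 e2 = R \<inter> {z. cnd e1 (N1 z) (D1 z)} \<inter> {z. cnd e2 (N2 z) (D2 z)}"
    by (auto simp: SS_def)
  thus ?thesis using R_open open_cnd by (simp add: open_Int)
qed

lemma FF_smooth: "smooth (SS e1 e2) (FF e1 e2)"
  unfolding smooth_def FF_def
proof
  fix k
  show "Ck k (SS e1 e2) (\<lambda>z. (fr e1 (N1 z) (D1 z), fr e2 (N2 z) (D2 z)))"
    by (intro Ck_Pair SS_open fr_Ck smN1 smD1 smN2 smD2) (auto simp: SS_def)
qed

definition GG :: "bool \<Rightarrow> bool \<Rightarrow> complex \<times> complex \<Rightarrow> complex \<times> complex \<Rightarrow> complex \<times> complex" where
  "GG e1 e2 z v = Wi z (mlt e1 (N1 z) (D1 z) * fst v, mlt e2 (N2 z) (D2 z) * snd v)"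

lemma mlt_ne0: "cnd e n d \<Longrightarrow> mlt e n d \<noteq> 0"
  by (cases e) (auto simp: cnd_def mlt_def)

lemma FF_deriv:
  assumes "z \<in> SS e1 e2"
  shows "(FF e1 e2 has_derivative (\<lambda>h. ((D1 z * dN1 z h - N1 z * dD1 z h) / mlt e1 (N1 z) (D1 z),
            (D2 z * dN2 z h - N2 z * dD2 z h) / mlt e2 (N2 z) (D2 z)))) (at z)"
  unfolding FF_def
  by (rule has_derivative_Pair; rule fr_deriv) (use assms hN1 hD1 hN2 hD2 in \<open>auto simp: SS_def\<close>)

lemma FF_rinv:
  assumes "z \<in> SS e1 e2"
  shows "frechet_derivative (FF e1 e2) (at z) (GG e1 e2 z v) = v"
proof -
  have "frechet_derivative (FF e1 e2) (at z) = (\<lambda>h. ((D1 z * dN1 z h - N1 z * dD1 z h) / mlt e1 (N1 z) (D1 z),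
            (D2 z * dN2 z h - N2 z * dD2 z h) / mlt e2 (N2 z) (D2 z)))"
    using frechet_derivative_at[OF FF_deriv[OF assms]] by simp
  moreover have "z \<in> R" "mlt e1 (N1 z) (D1 z) \<noteq> 0" "mlt e2 (N2 z) (D2 z) \<noteq> 0"
    using assms mlt_ne0 by (auto simp: SS_def)
  ultimately show ?thesis
    using Wi_rinv[of z "(mlt e1 (N1 z) (D1 z) * fst v, mlt e2 (N2 z) (D2 z) * snd v)"]
    by (simp add: GG_def prod_eq_iff)
qed

lemma mlt_Ck: "open S \<Longrightarrow> Ck k S N \<Longrightarrow> Ck k S D \<Longrightarrow> Ck k S (\<lambda>z. mlt e (N z) (D z))"
  by (cases e) (simp_all add: mlt_def Ck_intros)

lemma GG_smooth: "smooth (SS e1 e2) (\<lambda>z. GG e1 e2 z v)"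
  unfolding smooth_def GG_def
proof
  fix k
  show "Ck k (SS e1 e2) (\<lambda>z. Wi z (mlt e1 (N1 z) (D1 z) * fst v, mlt e2 (N2 z) (D2 z) * snd v))"
  proof (rule Wi_smooth[OF SS_open])
    show "SS e1 e2 \<subseteq> R" by (auto simp: SS_def)
    show "Ck k (SS e1 e2) (\<lambda>z. (mlt e1 (N1 z) (D1 z) * fst v, mlt e2 (N2 z) (D2 z) * snd v))"
      by (intro Ck_Pair SS_open Ck_mult mlt_Ck smN1 smD1 smN2 smD2 Ck_const)
  qed
qed

lemma FF_inv:
  assumes "inj_on (FF e1 e2) (SS e1 e2)"
  shows "open (FF e1 e2 ` SS e1 e2) \<and> smooth (FF e1 e2 ` SS e1 e2) (inv_into (SS e1 e2) (FF e1 e2))"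
  by (rule smooth_inv[OF SS_open FF_smooth assms FF_rinv GG_smooth])

end


lemma inv_into_eq_io:
  assumes "\<And>z. io z \<in> U" "\<And>z. ph (io z) = z" "\<And>m. m \<in> U \<Longrightarrow> io (ph m) = m"
  shows "inv_into U ph = io"
proof
  fix z
  have "inj_on ph U" using assms(3) by (metis inj_onI)
  thus "inv_into U ph z = io z" using assms by (intro inv_into_f_eq) auto
qed

lemma (in cdata) chart_pair:
  assumes io: "\<And>z. io z \<in> U" "\<And>z. ph (io z) = z" "\<And>m. m \<in> U \<Longrightarrow> io (ph m) = m"
    and ko: "\<And>z. ko z \<in> V" "\<And>z. ps (ko z) = z" "\<And>p. p \<in> V \<Longrightarrow> ko (ps p) = p"
    and A: "\<And>z. io z \<in> A \<longleftrightarrow> z \<in> R"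
    and urep: "\<And>z. u (io z) = (pfrac (N1 z) (D1 z), pfrac (N2 z) (D2 z))"
    and nd1: "\<And>z. N1 z \<noteq> 0 \<or> D1 z \<noteq> 0" and nd2: "\<And>z. N2 z \<noteq> 0 \<or> D2 z \<noteq> 0"
    and Vmem: "\<And>n1 d1 n2 d2. n1 \<noteq> 0 \<or> d1 \<noteq> 0 \<Longrightarrow> n2 \<noteq> 0 \<or> d2 \<noteq> 0 \<Longrightarrow>
        (pfrac n1 d1, pfrac n2 d2) \<in> V \<longleftrightarrow> cnd e1 n1 d1 \<and> cnd e2 n2 d2"
    and Vps: "\<And>n1 d1 n2 d2. n1 \<noteq> 0 \<or> d1 \<noteq> 0 \<Longrightarrow> n2 \<noteq> 0 \<or> d2 \<noteq> 0 \<Longrightarrow>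
        (pfrac n1 d1, pfrac n2 d2) \<in> V \<Longrightarrow> ps (pfrac n1 d1, pfrac n2 d2) = (fr e1 n1 d1, fr e2 n2 d2)"
    and inj: "inj_on u A"
  shows "Cinf_on (ph ` (A \<inter> U \<inter> u -` V)) (ps \<circ> u \<circ> inv_into U ph)
    \<and> Cinf_on (ps ` (u ` A \<inter> V \<inter> inv_into A u -` U)) (ph \<circ> inv_into A u \<circ> inv_into V ps)"
proof -
  have iU: "inv_into U ph = io" by (rule inv_into_eq_io[OF io])
  have iV: "inv_into V ps = ko" by (rule inv_into_eq_io[OF ko])
  have memV: "u (io z) \<in> V \<longleftrightarrow> cnd e1 (N1 z) (D1 z) \<and> cnd e2 (N2 z) (D2 z)" for z
    using Vmem[OF nd1 nd2] urep by simp
  have psu: "u (io z) \<in> V \<Longrightarrow> ps (u (io z)) = FF e1 e2 z" for z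
    using Vps[OF nd1 nd2] urep by (simp add: FF_def)
  have memSS: "z \<in> SS e1 e2 \<longleftrightarrow> io z \<in> A \<and> u (io z) \<in> V" for z
    using A memV by (auto simp: SS_def)
  have S1: "ph ` (A \<inter> U \<inter> u -` V) = SS e1 e2"
  proof
    show "ph ` (A \<inter> U \<inter> u -` V) \<subseteq> SS e1 e2"
      using io(3) memSS by fastforce
    show "SS e1 e2 \<subseteq> ph ` (A \<inter> U \<inter> u -` V)"
    proof
      fix z assume "z \<in> SS e1 e2"
      hence "io z \<in> A \<inter> U \<inter> u -` V" using memSS io(1) by auto
      thus "z \<in> ph ` (A \<inter> U \<inter> u -` V)" using io(2) by (metis image_eqI)
    qed
  qed
  have part1: "Cinf_on (ph ` (A \<inter> U \<inter> u -` V)) (ps \<circ> u \<circ> inv_into U ph)"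
    unfolding Cinf_on_def S1 iU
  proof (intro conjI allI SS_open)
    fix k show "Ck k (SS e1 e2) (ps \<circ> u \<circ> io)"
      by (rule Ck_cong[OF SS_open FF_smooth[unfolded smooth_def, rule_format]]) (simp add: psu memSS)
  qed
  have injF: "inj_on (FF e1 e2) (SS e1 e2)"
  proof (rule inj_onI)
    fix z z' assume z: "z \<in> SS e1 e2" "z' \<in> SS e1 e2" "FF e1 e2 z = FF e1 e2 z'"
    hence "ps (u (io z)) = ps (u (io z'))" using psu memSS by auto
    hence "ko (ps (u (io z))) = ko (ps (u (io z')))" by simp
    hence "u (io z) = u (io z')" using ko(3) memSS z by auto
    hence "io z = io z'" using inj memSS z by (auto dest: inj_onD)
    thus "z = z'" using io(2) by metis
  qed
  have S2: "ps ` (u ` A \<inter> V \<inter> inv_into A u -` U) = FF e1 e2 ` SS e1 e2"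
  proof
    show "ps ` (u ` A \<inter> V \<inter> inv_into A u -` U) \<subseteq> FF e1 e2 ` SS e1 e2"
    proof
      fix y assume "y \<in> ps ` (u ` A \<inter> V \<inter> inv_into A u -` U)"
      then obtain m where m: "m \<in> A" "u m \<in> V" "inv_into A u (u m) \<in> U" "y = ps (u m)" by auto
      have "inv_into A u (u m) = m" using inj m(1) by simp
      hence mU: "m \<in> U" using m(3) by simp
      define z where "z = ph m"
      have iz: "io z = m" using io(3)[OF mU] z_def by simp
      have "z \<in> SS e1 e2" using memSS iz m by simp
      moreover have "y = FF e1 e2 z" using psu[of z] iz m by simp
      ultimately show "y \<in> FF e1 e2 ` SS e1 e2" by blast
    qed
    show "FF e1 e2 ` SS e1 e2 \<subseteq> ps ` (u ` A \<inter> V \<inter> inv_into A u -` U)"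
    proof
      fix y assume "y \<in> FF e1 e2 ` SS e1 e2"
      then obtain z where z: "z \<in> SS e1 e2" "y = FF e1 e2 z" by auto
      have "io z \<in> A" "u (io z) \<in> V" using memSS z by auto
      moreover have "inv_into A u (u (io z)) = io z" using inj \<open>io z \<in> A\<close> by simp
      ultimately have "u (io z) \<in> u ` A \<inter> V \<inter> inv_into A u -` U" using io(1) by auto
      moreover have "y = ps (u (io z))" using psu z \<open>u (io z) \<in> V\<close> by simp
      ultimately show "y \<in> ps ` (u ` A \<inter> V \<inter> inv_into A u -` U)" by blast
    qed
  qed
  have eqf: "(ph \<circ> inv_into A u \<circ> inv_into V ps) y = inv_into (SS e1 e2) (FF e1 e2) y"
    if yin: "y \<in> FF e1 e2 ` SS e1 e2" for y
  proof -
    obtain z where z: "z \<in> SS e1 e2" "y = FF e1 e2 z" using yin by blast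
    have "io z \<in> A" "u (io z) \<in> V" using memSS z by auto
    have "ko y = u (io z)" using z psu ko(3) \<open>u (io z) \<in> V\<close> by metis
    moreover have "inv_into A u (u (io z)) = io z" using inj \<open>io z \<in> A\<close> by simp
    moreover have "inv_into (SS e1 e2) (FF e1 e2) y = z" using injF z by simp
    ultimately show ?thesis using io(2) iV by simp
  qed
  have part2: "Cinf_on (ps ` (u ` A \<inter> V \<inter> inv_into A u -` U)) (ph \<circ> inv_into A u \<circ> inv_into V ps)"
    unfolding Cinf_on_def S2
  proof (intro conjI allI)
    show "open (FF e1 e2 ` SS e1 e2)" using FF_inv[OF injF] by simp
    fix k show "Ck k (FF e1 e2 ` SS e1 e2) (ph \<circ> inv_into A u \<circ> inv_into V ps)"
      by (rule Ck_cong[OF _ FF_inv[OF injF, THEN conjunct2, unfolded smooth_def, rule_format]])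
         (use FF_inv[OF injF] eqf in auto)
  qed
  show ?thesis using part1 part2 by blast
qed

lemma pfrac_None_iff: "pfrac n d = None \<longleftrightarrow> d = 0" by (simp add: pfrac_def)
lemma pfrac_Some0_iff: "n \<noteq> 0 \<or> d \<noteq> 0 \<Longrightarrow> pfrac n d = Some 0 \<longleftrightarrow> n = 0" by (auto simp: pfrac_def)
lemma the_pfrac: "d \<noteq> 0 \<Longrightarrow> the (pfrac n d) = n / d" by (simp add: pfrac_def)
lemma pinv_pfrac: "n \<noteq> 0 \<Longrightarrow> pinv (pfrac n d) = d / n" by (simp add: pfrac_def pinv_def)

definition "XV1 = {(Some x, Some y) | x y. True}"
definition "XP1 = (\<lambda>(p, q). (the p, the q))"
definition "XV2 = {(p, Some y) | p y. p \<noteq> Some 0}"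
definition "XP2 = (\<lambda>(p, q). (pinv p, the q))"
definition "XV3 = {(Some x, q) | x q. q \<noteq> Some 0}"
definition "XP3 = (\<lambda>(p, q). (the p, pinv q))"
definition "XV4 = {(p, q) | p q. p \<noteq> Some 0 \<and> q \<noteq> Some 0}"
definition "XP4 = (\<lambda>(p, q). (pinv p, pinv q))"

lemma X_atlas_eq: "X_atlas = {(XV1, XP1), (XV2, XP2), (XV3, XP3), (XV4, XP4)}"
  by (simp add: X_atlas_def XV1_def XP1_def XV2_def XP2_def XV3_def XP3_def XV4_def XP4_def)

definition Xok :: "(sphere \<times> sphere) set \<Rightarrow> (sphere \<times> sphere \<Rightarrow> complex \<times> complex) \<Rightarrow> bool \<Rightarrow> bool
   \<Rightarrow> (complex \<times> complex \<Rightarrow> sphere \<times> sphere) \<Rightarrow> bool" where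
  "Xok V ps e1 e2 ko \<longleftrightarrow> (\<forall>z. ko z \<in> V) \<and> (\<forall>z. ps (ko z) = z) \<and> (\<forall>p\<in>V. ko (ps p) = p)
    \<and> (\<forall>n1 d1 n2 d2. (n1 \<noteq> 0 \<or> d1 \<noteq> 0) \<longrightarrow> (n2 \<noteq> 0 \<or> d2 \<noteq> 0) \<longrightarrow>
         ((pfrac n1 d1, pfrac n2 d2) \<in> V \<longleftrightarrow> cnd e1 n1 d1 \<and> cnd e2 n2 d2)
       \<and> ((pfrac n1 d1, pfrac n2 d2) \<in> V \<longrightarrow> ps (pfrac n1 d1, pfrac n2 d2) = (fr e1 n1 d1, fr e2 n2 d2)))"

lemma pinv_None[simp]: "pinv None = 0" by (simp add: pinv_def)
lemma pinv_Some[simp]: "pinv (Some x) = 1 / x" by (simp add: pinv_def)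

lemma sphere_cases_ne0: "p \<noteq> Some 0 \<Longrightarrow> pii (pinv p) = p" by (rule pii_pinv)

lemma Xok1: "Xok XV1 XP1 False False (\<lambda>z. (Some (fst z), Some (snd z)))"
  unfolding Xok_def XV1_def XP1_def
  by (auto simp: cnd_def fr_def pfrac_def)

lemma Xok2: "Xok XV2 XP2 True False (\<lambda>z. (pii (fst z), Some (snd z)))"
  unfolding Xok_def XV2_def XP2_def
  by (auto simp: cnd_def fr_def pfrac_def pii_pinv)

lemma Xok3: "Xok XV3 XP3 False True (\<lambda>z. (Some (fst z), pii (snd z)))"
  unfolding Xok_def XV3_def XP3_def
  by (auto simp: cnd_def fr_def pfrac_def pii_pinv)

lemma Xok4: "Xok XV4 XP4 True True (\<lambda>z. (pii (fst z), pii (snd z)))"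
  unfolding Xok_def XV4_def XP4_def
  by (auto simp: cnd_def fr_def pfrac_def pii_pinv)

lemma X_ok: "(V, ps) \<in> X_atlas \<Longrightarrow> \<exists>e1 e2 ko. Xok V ps e1 e2 ko"
  unfolding X_atlas_eq using Xok1 Xok2 Xok3 Xok4 by blast

definition "MU1 = {(Some d, Some a) | d a. True}"
definition "MP1 = (\<lambda>(p::sphere, q::sphere). (the p, the q))"
definition "MU2 = {(Some d, q) | d q. q \<noteq> Some 0}"
definition "MP2 = (\<lambda>(p::sphere, q). (the p, pinv q))"
definition "MU3 = {(p, Some a) | p a. p \<noteq> Some 0}"
definition "MP3 = (\<lambda>(p, q::sphere). (pinv p, the q * twist p))"
definition "MU4 = {(p, q) | p q. p \<noteq> Some 0 \<and> q \<noteq> Some 0}"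
definition "MP4 = (\<lambda>(p, q). (pinv p, pinv q / twist p))"

lemma M_atlas_eq: "M_atlas = {(MU1, MP1), (MU2, MP2), (MU3, MP3), (MU4, MP4)}"
  by (simp add: M_atlas_def MU1_def MP1_def MU2_def MP2_def MU3_def MP3_def MU4_def MP4_def)

definition Mok :: "param set \<Rightarrow> (param \<Rightarrow> complex \<times> complex) \<Rightarrow> (complex \<times> complex \<Rightarrow> param) \<Rightarrow> bool" where
  "Mok U ph io \<longleftrightarrow> (\<forall>z. io z \<in> U) \<and> (\<forall>z. ph (io z) = z) \<and> (\<forall>m\<in>U. io (ph m) = m)"

lemma Mok1: "Mok MU1 MP1 io1"
  unfolding Mok_def MU1_def MP1_def io1_def by auto

lemma Mok2: "Mok MU2 MP2 io2"
  unfolding Mok_def MU2_def MP2_def io2_def by (auto simp: pii_pinv)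

lemma Mok3: "Mok MU3 MP3 io3"
  unfolding Mok_def MU3_def MP3_def io3_def by (auto simp: pii_pinv twist_ne0)

lemma Mok4: "Mok MU4 MP4 io4"
  unfolding Mok_def MU4_def MP4_def io4_def by (auto simp: pii_pinv twist_ne0)

definition hsol :: "complex \<Rightarrow> complex \<Rightarrow> complex \<Rightarrow> complex" where
  "hsol A B q = (cnj A * q - B * cnj q) / (A * cnj A - B * cnj B)"

lemma hsol_eq:
  assumes X: "A * cnj A - B * cnj B \<noteq> 0"
  shows "A * hsol A B q + B * cnj (hsol A B q) = q"
proof -
  have h1: "cnj (hsol A B q) = (A * cnj q - cnj B * q) / (A * cnj A - B * cnj B)"
    by (simp add: hsol_def mult.commute)
  have "A * hsol A B q + B * cnj (hsol A B q)
     = (A * (cnj A * q - B * cnj q) + B * (A * cnj q - cnj B * q)) / (A * cnj A - B * cnj B)"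
    unfolding h1 hsol_def by (simp add: add_divide_distrib)
  also have "\<dots> = (q * (A * cnj A - B * cnj B)) / (A * cnj A - B * cnj B)"
    by (simp add: algebra_simps)
  also have "\<dots> = q" using X by simp
  finally show ?thesis .
qed

lemma AB_ne0:
  assumes "t \<noteq> 0" "cmod al \<noteq> 1"
  shows "((1 + t * cnj t) * (al * al) * cnj t) * cnj ((1 + t * cnj t) * (al * al) * cnj t)
     - ((1 + t * cnj t) * t) * cnj ((1 + t * cnj t) * t) \<noteq> 0"
proof -
  have e: "((1 + t * cnj t) * (al * al) * cnj t) * cnj ((1 + t * cnj t) * (al * al) * cnj t)
     - ((1 + t * cnj t) * t) * cnj ((1 + t * cnj t) * t)
     = of_real ((1 + (cmod t)^2)^2 * (cmod t)^2 * ((cmod al)^4 - 1))"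
  proof -
    have "((1 + t * cnj t) * (al * al) * cnj t) * cnj ((1 + t * cnj t) * (al * al) * cnj t)
     - ((1 + t * cnj t) * t) * cnj ((1 + t * cnj t) * t)
      = (1 + t * cnj t)^2 * (t * cnj t) * ((al * cnj al)^2 - 1)"
      by (simp add: algebra_simps power2_eq_square)
    also have "\<dots> = of_real ((1 + (cmod t)^2)^2 * (cmod t)^2 * ((cmod al)^4 - 1))"
      by (simp add: cnj_sq_real power_mult_distrib flip: power_mult)
    finally show ?thesis .
  qed
  have "(cmod al)^4 \<noteq> 1"
  proof
    assume "(cmod al)^4 = 1"
    hence "cmod al = 1" using power_eq_1_iff[of "cmod al" 4] by simp
    thus False using assms(2) by simp
  qed
  moreover have "(1 + (cmod t)^2)^2 \<noteq> 0"
  proof -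
    have "1 + (cmod t)^2 > 0" by (simp add: add_pos_nonneg)
    thus ?thesis by simp
  qed
  moreover have "(cmod t)^2 \<noteq> 0" using assms(1) by simp
  ultimately have "(1 + (cmod t)^2)^2 * (cmod t)^2 * ((cmod al)^4 - 1) \<noteq> 0" by simp
  thus ?thesis unfolding e using of_real_eq_0_iff by blast
qed


definition Ac :: "complex \<Rightarrow> complex \<Rightarrow> complex" where
  "Ac t al = (1 + t * cnj t) * (al * al) * cnj t"
definition Bc :: "complex \<Rightarrow> complex" where "Bc t = (1 + t * cnj t) * t"

lemma AcBc_ne0: "t \<noteq> 0 \<Longrightarrow> cmod al \<noteq> 1 \<Longrightarrow> Ac t al * cnj (Ac t al) - Bc t * cnj (Bc t) \<noteq> 0"
  unfolding Ac_def Bc_def by (rule AB_ne0)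

definition "dxN1 t (z::complex\<times>complex) h = fst h - snd h * t"
definition "dxD1 t (z::complex\<times>complex) h = (snd h * cnj (fst z) + snd z * cnj (fst h)) * t"
definition "dyN1 t (z::complex\<times>complex) h = cnj (snd h) * fst z + cnj (snd z) * fst h"
definition "dyD1 t (z::complex\<times>complex) h = cnj (snd h) + cnj (fst h) * t"

lemma hd1: "(xN1 t has_derivative dxN1 t z) (at z)" "(xD1 t has_derivative dxD1 t z) (at z)"
  "(yN1 t has_derivative dyN1 t z) (at z)" "(yD1 t has_derivative dyD1 t z) (at z)"
  unfolding xN1_def dxN1_def xD1_def dxD1_def yN1_def dyN1_def yD1_def dyD1_def
  by (auto intro!: derivative_eq_intros simp: algebra_simps)

definition "Wi1 t z p = (hsol (Ac t (cnj (snd z))) (Bc t) (cnj t * snd p + t * cnj (fst p)),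
   (xD1 t z * hsol (Ac t (cnj (snd z))) (Bc t) (cnj t * snd p + t * cnj (fst p))
     - snd z * t * xN1 t z * cnj (hsol (Ac t (cnj (snd z))) (Bc t) (cnj t * snd p + t * cnj (fst p)))
     - fst p) / (t * (1 + fst z * cnj (fst z))))"

lemma Wi1_rinv:
  assumes t: "t \<noteq> 0" and az: "cmod (snd z) \<noteq> 1"
  shows "(xD1 t z * dxN1 t z (Wi1 t z p) - xN1 t z * dxD1 t z (Wi1 t z p),
          yD1 t z * dyN1 t z (Wi1 t z p) - yN1 t z * dyD1 t z (Wi1 t z p)) = p"
proof -
  obtain d a where z: "z = (d, a)" by fastforce
  obtain p1 p2 where p: "p = (p1, p2)" by fastforce
  define h where "h = hsol (Ac t (cnj a)) (Bc t) (cnj t * p2 + t * cnj p1)"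
  define k where "k = (xD1 t z * h - a * t * xN1 t z * cnj h - p1) / (t * (1 + d * cnj d))"
  have W: "Wi1 t z p = (h, k)" by (simp add: Wi1_def h_def k_def z p)
  have tau: "t * (1 + d * cnj d) \<noteq> 0" using t_one_plus_ne0[OF t] .
  have keq: "k * (t * (1 + d * cnj d)) = xD1 t z * h - a * t * xN1 t z * cnj h - p1"
    using tau by (simp add: k_def)
  have heq: "Ac t (cnj a) * h + Bc t * cnj h = cnj t * p2 + t * cnj p1"
    unfolding h_def by (rule hsol_eq[OF AcBc_ne0[OF t]]) (use az z in simp)
  have kc: "cnj k * (cnj t * (1 + cnj d * d)) = cnj (xD1 t z) * cnj h - cnj a * cnj t * cnj (xN1 t z) * h - cnj p1"
    using arg_cong[OF keq, of cnj] by simp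
  have c1: "xD1 t z * dxN1 t z (h, k) - xN1 t z * dxD1 t z (h, k)
      = xD1 t z * h - a * t * xN1 t z * cnj h - k * (t * (1 + d * cnj d))"
    by (simp add: z chart_defs dxN1_def dxD1_def algebra_simps)
  have c2: "cnj t * (yD1 t z * dyN1 t z (h, k) - yN1 t z * dyD1 t z (h, k))
     = (Ac t (cnj a) * h + Bc t * cnj h - (cnj t * p2 + t * cnj p1))
       + t * (cnj k * (cnj t * (1 + cnj d * d)) - (cnj (xD1 t z) * cnj h - cnj a * cnj t * cnj (xN1 t z) * h - cnj p1))
       + cnj t * p2"
    by (simp add: z chart_defs dyN1_def dyD1_def Ac_def Bc_def algebra_simps)
  have "yD1 t z * dyN1 t z (h, k) - yN1 t z * dyD1 t z (h, k) = p2"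
    using c2 heq kc t by simp
  moreover have "xD1 t z * dxN1 t z (h, k) - xN1 t z * dxD1 t z (h, k) = p1"
    using c1 keq by simp
  ultimately show ?thesis unfolding W by (simp add: p)
qed

lemma Wi1_smooth:
  assumes t: "t \<noteq> 0" and S: "open S" "S \<subseteq> {z. cmod (snd z) \<noteq> 1}" and P: "Ck k S P"
  shows "Ck k S (\<lambda>z. Wi1 t z (P z))"
proof -
  have ne: "Ac t (cnj (snd z)) * cnj (Ac t (cnj (snd z))) - Bc t * cnj (Bc t) \<noteq> 0" if "z \<in> S" for z
    using AcBc_ne0[OF t] S that by auto
  have tau: "t * (1 + fst z * cnj (fst z)) \<noteq> 0" for z using t_one_plus_ne0[OF t] .
  have fP: "Ck k S (\<lambda>z. fst (P z))" "Ck k S (\<lambda>z. snd (P z))"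
    using Ck_linear_comp[OF bounded_linear_fst S(1) P] Ck_linear_comp[OF bounded_linear_snd S(1) P] by auto
  show ?thesis
    unfolding Wi1_def hsol_def xD1_def xN1_def Ac_def Bc_def
    by (intro Ck_intros S(1) fP; (use ne tau in \<open>simp add: hsol_def Ac_def Bc_def\<close>)?)
qed


definition "dxN2 t (z::complex\<times>complex) h = snd h * fst z + snd z * fst h"
definition "dxD2 t (z::complex\<times>complex) h = snd h + cnj (fst h) * t"
definition "dyN2 t (z::complex\<times>complex) h = fst h - t * cnj (snd h)"
definition "dyD2 t (z::complex\<times>complex) h = (cnj (snd h) * cnj (fst z) + cnj (snd z) * cnj (fst h)) * t"

lemma hd2: "(xN2 t has_derivative dxN2 t z) (at z)" "(xD2 t has_derivative dxD2 t z) (at z)"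
  "(yN2 t has_derivative dyN2 t z) (at z)" "(yD2 t has_derivative dyD2 t z) (at z)"
  unfolding xN2_def dxN2_def xD2_def dxD2_def yN2_def dyN2_def yD2_def dyD2_def
  by (auto intro!: derivative_eq_intros simp: algebra_simps)

definition "Wi2 t z p = (hsol (Ac t (snd z)) (Bc t) (cnj t * fst p + t * cnj (snd p)),
   cnj ((yD2 t z * hsol (Ac t (snd z)) (Bc t) (cnj t * fst p + t * cnj (snd p))
     - cnj (snd z) * t * yN2 t z * cnj (hsol (Ac t (snd z)) (Bc t) (cnj t * fst p + t * cnj (snd p)))
     - snd p) / (t * (1 + fst z * cnj (fst z)))))"

lemma Wi2_rinv:
  assumes t: "t \<noteq> 0" and az: "cmod (snd z) \<noteq> 1"
  shows "(xD2 t z * dxN2 t z (Wi2 t z p) - xN2 t z * dxD2 t z (Wi2 t z p),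
          yD2 t z * dyN2 t z (Wi2 t z p) - yN2 t z * dyD2 t z (Wi2 t z p)) = p"
proof -
  obtain d c where z: "z = (d, c)" by fastforce
  obtain p1 p2 where p: "p = (p1, p2)" by fastforce
  define h where "h = hsol (Ac t c) (Bc t) (cnj t * p1 + t * cnj p2)"
  define k where "k = cnj ((yD2 t z * h - cnj c * t * yN2 t z * cnj h - p2) / (t * (1 + d * cnj d)))"
  have W: "Wi2 t z p = (h, k)" by (simp add: Wi2_def h_def k_def z p)
  have tau: "t * (1 + d * cnj d) \<noteq> 0" using t_one_plus_ne0[OF t] .
  have keq: "cnj k * (t * (1 + d * cnj d)) = yD2 t z * h - cnj c * t * yN2 t z * cnj h - p2"
    using tau by (simp add: k_def)
  have heq: "Ac t c * h + Bc t * cnj h = cnj t * p1 + t * cnj p2"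
    unfolding h_def by (rule hsol_eq[OF AcBc_ne0[OF t]]) (use az z in simp)
  have kc: "k * (cnj t * (1 + cnj d * d)) = cnj (yD2 t z) * cnj h - c * cnj t * cnj (yN2 t z) * h - cnj p2"
    using arg_cong[OF keq, of cnj] by simp
  have c1: "yD2 t z * dyN2 t z (h, k) - yN2 t z * dyD2 t z (h, k)
      = yD2 t z * h - cnj c * t * yN2 t z * cnj h - cnj k * (t * (1 + d * cnj d))"
    by (simp add: z chart_defs dyN2_def dyD2_def algebra_simps)
  have c2: "cnj t * (xD2 t z * dxN2 t z (h, k) - xN2 t z * dxD2 t z (h, k))
     = (Ac t c * h + Bc t * cnj h - (cnj t * p1 + t * cnj p2))
       + t * (k * (cnj t * (1 + cnj d * d)) - (cnj (yD2 t z) * cnj h - c * cnj t * cnj (yN2 t z) * h - cnj p2))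
       + cnj t * p1"
    by (simp add: z chart_defs dxN2_def dxD2_def Ac_def Bc_def algebra_simps)
  have "xD2 t z * dxN2 t z (h, k) - xN2 t z * dxD2 t z (h, k) = p1"
    using c2 heq kc t by simp
  moreover have "yD2 t z * dyN2 t z (h, k) - yN2 t z * dyD2 t z (h, k) = p2"
    using c1 keq by simp
  ultimately show ?thesis unfolding W by (simp add: p)
qed

lemma Wi2_smooth:
  assumes t: "t \<noteq> 0" and S: "open S" "S \<subseteq> {z. cmod (snd z) \<noteq> 1}" and P: "Ck k S P"
  shows "Ck k S (\<lambda>z. Wi2 t z (P z))"
proof -
  have ne: "Ac t (snd z) * cnj (Ac t (snd z)) - Bc t * cnj (Bc t) \<noteq> 0" if "z \<in> S" for z
    using AcBc_ne0[OF t] S that by auto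
  have tau: "t * (1 + fst z * cnj (fst z)) \<noteq> 0" for z using t_one_plus_ne0[OF t] .
  have fP: "Ck k S (\<lambda>z. fst (P z))" "Ck k S (\<lambda>z. snd (P z))"
    using Ck_linear_comp[OF bounded_linear_fst S(1) P] Ck_linear_comp[OF bounded_linear_snd S(1) P] by auto
  show ?thesis
    unfolding Wi2_def hsol_def yD2_def yN2_def Ac_def Bc_def
    by (intro Ck_intros S(1) fP; (use ne tau in \<open>simp add: hsol_def Ac_def Bc_def\<close>)?)
qed

definition "dxN3 t (z::complex\<times>complex) h = - ((snd h * cnj (fst z) + snd z * cnj (fst h)) * t)"
definition "dxD3 t (z::complex\<times>complex) h = fst h + snd h * t"
definition "dyN3 t (z::complex\<times>complex) h = cnj (snd h) - t * cnj (fst h)"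
definition "dyD3 t (z::complex\<times>complex) h = cnj (snd h) * fst z + cnj (snd z) * fst h"

lemma hd3: "(xN3 t has_derivative dxN3 t z) (at z)" "(xD3 t has_derivative dxD3 t z) (at z)"
  "(yN3 t has_derivative dyN3 t z) (at z)" "(yD3 t has_derivative dyD3 t z) (at z)"
  unfolding xN3_def dxN3_def xD3_def dxD3_def yN3_def dyN3_def yD3_def dyD3_def
  by (auto intro!: derivative_eq_intros simp: algebra_simps)

definition "Wi3 t z p = (hsol (Ac t (cnj (snd z))) (Bc t) (- (cnj t * snd p + t * cnj (fst p))),
   - (fst p + xN3 t z * hsol (Ac t (cnj (snd z))) (Bc t) (- (cnj t * snd p + t * cnj (fst p)))
     + snd z * t * xD3 t z * cnj (hsol (Ac t (cnj (snd z))) (Bc t) (- (cnj t * snd p + t * cnj (fst p)))))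
     / (t * (1 + fst z * cnj (fst z))))"

lemma Wi3_rinv:
  assumes t: "t \<noteq> 0" and az: "cmod (snd z) \<noteq> 1"
  shows "(xD3 t z * dxN3 t z (Wi3 t z p) - xN3 t z * dxD3 t z (Wi3 t z p),
          yD3 t z * dyN3 t z (Wi3 t z p) - yN3 t z * dyD3 t z (Wi3 t z p)) = p"
proof -
  obtain w b where z: "z = (w, b)" by fastforce
  obtain p1 p2 where p: "p = (p1, p2)" by fastforce
  define h where "h = hsol (Ac t (cnj b)) (Bc t) (- (cnj t * p2 + t * cnj p1))"
  define k where "k = - (p1 + xN3 t z * h + b * t * xD3 t z * cnj h) / (t * (1 + w * cnj w))"
  have W: "Wi3 t z p = (h, k)" by (simp add: Wi3_def h_def k_def z p)
  have tau: "t * (1 + w * cnj w) \<noteq> 0" using t_one_plus_ne0[OF t] .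
  have keq: "k * (t * (1 + w * cnj w)) = - (p1 + xN3 t z * h + b * t * xD3 t z * cnj h)"
    using tau by (simp add: k_def)
  have heq: "Ac t (cnj b) * h + Bc t * cnj h = - (cnj t * p2 + t * cnj p1)"
    unfolding h_def by (rule hsol_eq[OF AcBc_ne0[OF t]]) (use az z in simp)
  have kc: "cnj k * (cnj t * (1 + cnj w * w)) = - (cnj p1 + cnj (xN3 t z) * cnj h + cnj b * cnj t * cnj (xD3 t z) * h)"
    using arg_cong[OF keq, of cnj] by simp
  have c1: "xD3 t z * dxN3 t z (h, k) - xN3 t z * dxD3 t z (h, k)
      = - (k * (t * (1 + w * cnj w))) - xN3 t z * h - b * t * xD3 t z * cnj h"
    by (simp add: z chart_defs dxN3_def dxD3_def algebra_simps)
  have c2: "cnj t * (yD3 t z * dyN3 t z (h, k) - yN3 t z * dyD3 t z (h, k))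
     = - (Ac t (cnj b) * h + Bc t * cnj h - (- (cnj t * p2 + t * cnj p1)))
       + t * (cnj k * (cnj t * (1 + cnj w * w)) + (cnj p1 + cnj (xN3 t z) * cnj h + cnj b * cnj t * cnj (xD3 t z) * h))
       + cnj t * p2"
    by (simp add: z chart_defs dyN3_def dyD3_def Ac_def Bc_def algebra_simps)
  have "yD3 t z * dyN3 t z (h, k) - yN3 t z * dyD3 t z (h, k) = p2"
    using c2 heq kc t by simp
  moreover have "xD3 t z * dxN3 t z (h, k) - xN3 t z * dxD3 t z (h, k) = p1"
    using c1 keq by simp
  ultimately show ?thesis unfolding W by (simp add: p)
qed

lemma Wi3_smooth:
  assumes t: "t \<noteq> 0" and S: "open S" "S \<subseteq> {z. cmod (snd z) \<noteq> 1}" and P: "Ck k S P"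
  shows "Ck k S (\<lambda>z. Wi3 t z (P z))"
proof -
  have ne: "Ac t (cnj (snd z)) * cnj (Ac t (cnj (snd z))) - Bc t * cnj (Bc t) \<noteq> 0" if "z \<in> S" for z
    using AcBc_ne0[OF t] S that by auto
  have tau: "t * (1 + fst z * cnj (fst z)) \<noteq> 0" for z using t_one_plus_ne0[OF t] .
  have fP: "Ck k S (\<lambda>z. fst (P z))" "Ck k S (\<lambda>z. snd (P z))"
    using Ck_linear_comp[OF bounded_linear_fst S(1) P] Ck_linear_comp[OF bounded_linear_snd S(1) P] by auto
  show ?thesis
    unfolding Wi3_def hsol_def xD3_def xN3_def Ac_def Bc_def
    by (intro Ck_intros S(1) fP; (use ne tau in \<open>simp add: hsol_def Ac_def Bc_def\<close>)?)
qed

definition "dxN4 t (z::complex\<times>complex) h = snd h - cnj (fst h) * t"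
definition "dxD4 t (z::complex\<times>complex) h = snd h * fst z + snd z * fst h"
definition "dyN4 t (z::complex\<times>complex) h = - (t * (cnj (fst h) * cnj (snd z) + cnj (fst z) * cnj (snd h)))"
definition "dyD4 t (z::complex\<times>complex) h = fst h + t * cnj (snd h)"

lemma hd4: "(xN4 t has_derivative dxN4 t z) (at z)" "(xD4 t has_derivative dxD4 t z) (at z)"
  "(yN4 t has_derivative dyN4 t z) (at z)" "(yD4 t has_derivative dyD4 t z) (at z)"
  unfolding xN4_def dxN4_def xD4_def dxD4_def yN4_def dyN4_def yD4_def dyD4_def
  by (auto intro!: derivative_eq_intros simp: algebra_simps)

definition "Wi4 t z p = (hsol (Ac t (snd z)) (Bc t) (- (cnj t * fst p + t * cnj (snd p))),
   cnj (- (snd p + yN4 t z * hsol (Ac t (snd z)) (Bc t) (- (cnj t * fst p + t * cnj (snd p)))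
     + cnj (snd z) * t * yD4 t z * cnj (hsol (Ac t (snd z)) (Bc t) (- (cnj t * fst p + t * cnj (snd p)))))
     / (t * (1 + fst z * cnj (fst z)))))"

lemma Wi4_rinv:
  assumes t: "t \<noteq> 0" and az: "cmod (snd z) \<noteq> 1"
  shows "(xD4 t z * dxN4 t z (Wi4 t z p) - xN4 t z * dxD4 t z (Wi4 t z p),
          yD4 t z * dyN4 t z (Wi4 t z p) - yN4 t z * dyD4 t z (Wi4 t z p)) = p"
proof -
  obtain w c where z: "z = (w, c)" by fastforce
  obtain p1 p2 where p: "p = (p1, p2)" by fastforce
  define h where "h = hsol (Ac t c) (Bc t) (- (cnj t * p1 + t * cnj p2))"
  define k where "k = cnj (- (p2 + yN4 t z * h + cnj c * t * yD4 t z * cnj h) / (t * (1 + w * cnj w)))"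
  have W: "Wi4 t z p = (h, k)" by (simp add: Wi4_def h_def k_def z p)
  have tau: "t * (1 + w * cnj w) \<noteq> 0" using t_one_plus_ne0[OF t] .
  have keq: "cnj k * (t * (1 + w * cnj w)) = - (p2 + yN4 t z * h + cnj c * t * yD4 t z * cnj h)"
    using tau by (simp add: k_def)
  have heq: "Ac t c * h + Bc t * cnj h = - (cnj t * p1 + t * cnj p2)"
    unfolding h_def by (rule hsol_eq[OF AcBc_ne0[OF t]]) (use az z in simp)
  have kc: "k * (cnj t * (1 + cnj w * w)) = - (cnj p2 + cnj (yN4 t z) * cnj h + c * cnj t * cnj (yD4 t z) * h)"
    using arg_cong[OF keq, of cnj] by simp
  have c1: "yD4 t z * dyN4 t z (h, k) - yN4 t z * dyD4 t z (h, k)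
      = - (cnj k * (t * (1 + w * cnj w))) - yN4 t z * h - cnj c * t * yD4 t z * cnj h"
    by (simp add: z chart_defs dyN4_def dyD4_def algebra_simps)
  have c2: "cnj t * (xD4 t z * dxN4 t z (h, k) - xN4 t z * dxD4 t z (h, k))
     = - (Ac t c * h + Bc t * cnj h - (- (cnj t * p1 + t * cnj p2)))
       + t * (k * (cnj t * (1 + cnj w * w)) + (cnj p2 + cnj (yN4 t z) * cnj h + c * cnj t * cnj (yD4 t z) * h))
       + cnj t * p1"
    by (simp add: z chart_defs dxN4_def dxD4_def Ac_def Bc_def algebra_simps)
  have "xD4 t z * dxN4 t z (h, k) - xN4 t z * dxD4 t z (h, k) = p1"
    using c2 heq kc t by simp
  moreover have "yD4 t z * dyN4 t z (h, k) - yN4 t z * dyD4 t z (h, k) = p2"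
    using c1 keq by simp
  ultimately show ?thesis unfolding W by (simp add: p)
qed

lemma Wi4_smooth:
  assumes t: "t \<noteq> 0" and S: "open S" "S \<subseteq> {z. cmod (snd z) \<noteq> 1}" and P: "Ck k S P"
  shows "Ck k S (\<lambda>z. Wi4 t z (P z))"
proof -
  have ne: "Ac t (snd z) * cnj (Ac t (snd z)) - Bc t * cnj (Bc t) \<noteq> 0" if "z \<in> S" for z
    using AcBc_ne0[OF t] S that by auto
  have tau: "t * (1 + fst z * cnj (fst z)) \<noteq> 0" for z using t_one_plus_ne0[OF t] .
  have fP: "Ck k S (\<lambda>z. fst (P z))" "Ck k S (\<lambda>z. snd (P z))"
    using Ck_linear_comp[OF bounded_linear_fst S(1) P] Ck_linear_comp[OF bounded_linear_snd S(1) P] by auto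
  show ?thesis
    unfolding Wi4_def hsol_def yD4_def yN4_def Ac_def Bc_def
    by (intro Ck_intros S(1) fP; (use ne tau in \<open>simp add: hsol_def Ac_def Bc_def\<close>)?)
qed

lemma (in cdata) all_X:
  assumes M: "Mok U ph io" and A: "\<And>z. io z \<in> A \<longleftrightarrow> z \<in> R"
    and urep: "\<And>z. u (io z) = (pfrac (N1 z) (D1 z), pfrac (N2 z) (D2 z))"
    and nd1: "\<And>z. N1 z \<noteq> 0 \<or> D1 z \<noteq> 0" and nd2: "\<And>z. N2 z \<noteq> 0 \<or> D2 z \<noteq> 0"
    and inj: "inj_on u A"
  shows "\<forall>(V, ps)\<in>X_atlas. Cinf_on (ph ` (A \<inter> U \<inter> u -` V)) (ps \<circ> u \<circ> inv_into U ph)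
      \<and> Cinf_on (ps ` (u ` A \<inter> V \<inter> inv_into A u -` U)) (ph \<circ> inv_into A u \<circ> inv_into V ps)"
proof clarify
  fix V ps assume "(V, ps) \<in> X_atlas"
  then obtain e1 e2 ko where X: "Xok V ps e1 e2 ko" using X_ok by blast
  show "Cinf_on (ph ` (A \<inter> U \<inter> u -` V)) (ps \<circ> u \<circ> inv_into U ph)
      \<and> Cinf_on (ps ` (u ` A \<inter> V \<inter> inv_into A u -` U)) (ph \<circ> inv_into A u \<circ> inv_into V ps)"
    by (rule chart_pair[of io U ph ko V ps A u e1 e2])
       (use M X A urep nd1 nd2 inj in \<open>auto simp: Mok_def Xok_def\<close>)
qed

lemma open_lt1: "open {z::complex\<times>complex. cmod (snd z) < 1}"
  by (rule open_Collect_less) (auto intro!: continuous_intros)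
lemma open_gt1: "open {z::complex\<times>complex. cmod (snd z) > 1}"
  by (rule open_Collect_less) (auto intro!: continuous_intros)

lemma cdata1: assumes "t \<noteq> 0" "R = {z. cmod (snd z) < 1} \<or> R = {z. cmod (snd z) > 1}"
  shows "cdata (xN1 t) (xD1 t) (yN1 t) (yD1 t) (dxN1 t) (dxD1 t) (dyN1 t) (dyD1 t) (Wi1 t) R"
proof
  show "open R" using assms(2) open_lt1 open_gt1 by auto
  have R: "R \<subseteq> {z. cmod (snd z) \<noteq> 1}" using assms(2) by auto
  fix S :: "(complex \<times> complex) set" and k and P :: "complex \<times> complex \<Rightarrow> complex \<times> complex" assume "open S"
  thus "Ck k S (xN1 t)" "Ck k S (xD1 t)" "Ck k S (yN1 t)" "Ck k S (yD1 t)"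
    unfolding xN1_def xD1_def yN1_def yD1_def by (intro Ck_intros; assumption)+
  assume "S \<subseteq> R" "Ck k S P"
  thus "Ck k S (\<lambda>z. Wi1 t z (P z))" using Wi1_smooth[OF assms(1) \<open>open S\<close>] R by blast
next
  fix z show "(xN1 t has_derivative dxN1 t z) (at z)" "(xD1 t has_derivative dxD1 t z) (at z)"
    "(yN1 t has_derivative dyN1 t z) (at z)" "(yD1 t has_derivative dyD1 t z) (at z)" by (rule hd1)+
next
  fix z p assume "z \<in> R"
  hence "cmod (snd z) \<noteq> 1" using assms(2) by auto
  thus "(xD1 t z * dxN1 t z (Wi1 t z p) - xN1 t z * dxD1 t z (Wi1 t z p),
          yD1 t z * dyN1 t z (Wi1 t z p) - yN1 t z * dyD1 t z (Wi1 t z p)) = p"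
    by (rule Wi1_rinv[OF assms(1)])
qed


lemma cdata2: assumes "t \<noteq> 0" "R = {z. cmod (snd z) < 1} \<or> R = {z. cmod (snd z) > 1}"
  shows "cdata (xN2 t) (xD2 t) (yN2 t) (yD2 t) (dxN2 t) (dxD2 t) (dyN2 t) (dyD2 t) (Wi2 t) R"
proof
  show "open R" using assms(2) open_lt1 open_gt1 by auto
  have R: "R \<subseteq> {z. cmod (snd z) \<noteq> 1}" using assms(2) by auto
  fix S :: "(complex \<times> complex) set" and k and P :: "complex \<times> complex \<Rightarrow> complex \<times> complex" assume "open S"
  thus "Ck k S (xN2 t)" "Ck k S (xD2 t)" "Ck k S (yN2 t)" "Ck k S (yD2 t)"
    unfolding xN2_def xD2_def yN2_def yD2_def by (intro Ck_intros; assumption)+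
  assume "S \<subseteq> R" "Ck k S P"
  thus "Ck k S (\<lambda>z. Wi2 t z (P z))" using Wi2_smooth[OF assms(1) \<open>open S\<close>] R by blast
next
  fix z show "(xN2 t has_derivative dxN2 t z) (at z)" "(xD2 t has_derivative dxD2 t z) (at z)"
    "(yN2 t has_derivative dyN2 t z) (at z)" "(yD2 t has_derivative dyD2 t z) (at z)" by (rule hd2)+
next
  fix z p assume "z \<in> R"
  hence "cmod (snd z) \<noteq> 1" using assms(2) by auto
  thus "(xD2 t z * dxN2 t z (Wi2 t z p) - xN2 t z * dxD2 t z (Wi2 t z p),
          yD2 t z * dyN2 t z (Wi2 t z p) - yN2 t z * dyD2 t z (Wi2 t z p)) = p"
    by (rule Wi2_rinv[OF assms(1)])
qed


lemma cdata3: assumes "t \<noteq> 0" "R = {z. cmod (snd z) < 1} \<or> R = {z. cmod (snd z) > 1}"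
  shows "cdata (xN3 t) (xD3 t) (yN3 t) (yD3 t) (dxN3 t) (dxD3 t) (dyN3 t) (dyD3 t) (Wi3 t) R"
proof
  show "open R" using assms(2) open_lt1 open_gt1 by auto
  have R: "R \<subseteq> {z. cmod (snd z) \<noteq> 1}" using assms(2) by auto
  fix S :: "(complex \<times> complex) set" and k and P :: "complex \<times> complex \<Rightarrow> complex \<times> complex" assume "open S"
  thus "Ck k S (xN3 t)" "Ck k S (xD3 t)" "Ck k S (yN3 t)" "Ck k S (yD3 t)"
    unfolding xN3_def xD3_def yN3_def yD3_def by (intro Ck_intros; assumption)+
  assume "S \<subseteq> R" "Ck k S P"
  thus "Ck k S (\<lambda>z. Wi3 t z (P z))" using Wi3_smooth[OF assms(1) \<open>open S\<close>] R by blast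
next
  fix z show "(xN3 t has_derivative dxN3 t z) (at z)" "(xD3 t has_derivative dxD3 t z) (at z)"
    "(yN3 t has_derivative dyN3 t z) (at z)" "(yD3 t has_derivative dyD3 t z) (at z)" by (rule hd3)+
next
  fix z p assume "z \<in> R"
  hence "cmod (snd z) \<noteq> 1" using assms(2) by auto
  thus "(xD3 t z * dxN3 t z (Wi3 t z p) - xN3 t z * dxD3 t z (Wi3 t z p),
          yD3 t z * dyN3 t z (Wi3 t z p) - yN3 t z * dyD3 t z (Wi3 t z p)) = p"
    by (rule Wi3_rinv[OF assms(1)])
qed


lemma cdata4: assumes "t \<noteq> 0" "R = {z. cmod (snd z) < 1} \<or> R = {z. cmod (snd z) > 1}"
  shows "cdata (xN4 t) (xD4 t) (yN4 t) (yD4 t) (dxN4 t) (dxD4 t) (dyN4 t) (dyD4 t) (Wi4 t) R"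
proof
  show "open R" using assms(2) open_lt1 open_gt1 by auto
  have R: "R \<subseteq> {z. cmod (snd z) \<noteq> 1}" using assms(2) by auto
  fix S :: "(complex \<times> complex) set" and k and P :: "complex \<times> complex \<Rightarrow> complex \<times> complex" assume "open S"
  thus "Ck k S (xN4 t)" "Ck k S (xD4 t)" "Ck k S (yN4 t)" "Ck k S (yD4 t)"
    unfolding xN4_def xD4_def yN4_def yD4_def by (intro Ck_intros; assumption)+
  assume "S \<subseteq> R" "Ck k S P"
  thus "Ck k S (\<lambda>z. Wi4 t z (P z))" using Wi4_smooth[OF assms(1) \<open>open S\<close>] R by blast
next
  fix z show "(xN4 t has_derivative dxN4 t z) (at z)" "(xD4 t has_derivative dxD4 t z) (at z)"
    "(yN4 t has_derivative dyN4 t z) (at z)" "(yD4 t has_derivative dyD4 t z) (at z)" by (rule hd4)+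
next
  fix z p assume "z \<in> R"
  hence "cmod (snd z) \<noteq> 1" using assms(2) by auto
  thus "(xD4 t z * dxN4 t z (Wi4 t z p) - xN4 t z * dxD4 t z (Wi4 t z p),
          yD4 t z * dyN4 t z (Wi4 t z p) - yN4 t z * dyD4 t z (Wi4 t z p)) = p"
    by (rule Wi4_rinv[OF assms(1)])
qed


lemma cmod_twist_pii: "cmod (twist (pii w)) = 1"
  by (cases "w = 0") (auto simp: twist_pii twist_pii0 norm_divide)

lemma reg1: "io1 z \<in> Mplus \<longleftrightarrow> z \<in> {z. cmod (snd z) < 1}" "io1 z \<in> Mminus \<longleftrightarrow> z \<in> {z. cmod (snd z) > 1}"
  by (auto simp: io1_def Mplus_def Mminus_def)

lemma reg2: "io2 z \<in> Mplus \<longleftrightarrow> z \<in> {z. cmod (snd z) > 1}" "io2 z \<in> Mminus \<longleftrightarrow> z \<in> {z. cmod (snd z) < 1}"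
  by (auto simp: io2_def Mplus_def Mminus_def pii_def norm_divide divide_less_eq less_divide_eq)

lemma reg3: "io3 z \<in> Mplus \<longleftrightarrow> z \<in> {z. cmod (snd z) < 1}" "io3 z \<in> Mminus \<longleftrightarrow> z \<in> {z. cmod (snd z) > 1}"
  by (auto simp: io3_def Mplus_def Mminus_def norm_divide cmod_twist_pii)

lemma reg4: "io4 z \<in> Mplus \<longleftrightarrow> z \<in> {z. cmod (snd z) > 1}" "io4 z \<in> Mminus \<longleftrightarrow> z \<in> {z. cmod (snd z) < 1}"
proof -
  define tw where "tw = twist (pii (fst z))"
  have ct: "cmod tw = 1" by (simp add: tw_def cmod_twist_pii)
  hence tw0: "tw \<noteq> 0" by auto
  have io: "io4 z = (pii (fst z), pii (snd z * tw))" by (simp add: io4_def tw_def)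
  have "(io4 z \<in> Mplus \<longleftrightarrow> cmod (snd z) > 1) \<and> (io4 z \<in> Mminus \<longleftrightarrow> cmod (snd z) < 1)"
  proof (cases "snd z = 0")
    case True thus ?thesis by (simp add: io pii_def Mplus_def Mminus_def)
  next
    case False
    hence "pii (snd z * tw) = Some (1 / (snd z * tw))" using tw0 by (simp add: pii_def)
    moreover have "cmod (1 / (snd z * tw)) = 1 / cmod (snd z)" by (simp add: norm_divide norm_mult ct)
    moreover have "1 / cmod (snd z) < 1 \<longleftrightarrow> cmod (snd z) > 1" "1 / cmod (snd z) > 1 \<longleftrightarrow> cmod (snd z) < 1"
      using False by (auto simp: divide_less_eq less_divide_eq)
    ultimately show ?thesis by (simp add: io Mplus_def Mminus_def)
  qed
  thus "io4 z \<in> Mplus \<longleftrightarrow> z \<in> {z. cmod (snd z) > 1}" "io4 z \<in> Mminus \<longleftrightarrow> z \<in> {z. cmod (snd z) < 1}" by auto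
qed

lemma sm_gen:
  assumes t: "t \<noteq> 0" and inj: "inj_on (uM t) A"
    and R1: "R1 = {z. cmod (snd z) < 1} \<or> R1 = {z. cmod (snd z) > 1}" "\<And>z. io1 z \<in> A \<longleftrightarrow> z \<in> R1"
    and R2: "R2 = {z. cmod (snd z) < 1} \<or> R2 = {z. cmod (snd z) > 1}" "\<And>z. io2 z \<in> A \<longleftrightarrow> z \<in> R2"
    and R3: "R3 = {z. cmod (snd z) < 1} \<or> R3 = {z. cmod (snd z) > 1}" "\<And>z. io3 z \<in> A \<longleftrightarrow> z \<in> R3"
    and R4: "R4 = {z. cmod (snd z) < 1} \<or> R4 = {z. cmod (snd z) > 1}" "\<And>z. io4 z \<in> A \<longleftrightarrow> z \<in> R4"
  shows "smooth_map M_atlas X_atlas A (uM t) \<and> smooth_map X_atlas M_atlas (uM t ` A) (inv_into A (uM t))"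
proof -
  have c1: "\<forall>(V, ps)\<in>X_atlas. Cinf_on (MP1 ` (A \<inter> MU1 \<inter> uM t -` V)) (ps \<circ> uM t \<circ> inv_into MU1 MP1)
      \<and> Cinf_on (ps ` (uM t ` A \<inter> V \<inter> inv_into A (uM t) -` MU1)) (MP1 \<circ> inv_into A (uM t) \<circ> inv_into V ps)"
    by (rule cdata.all_X[OF cdata1[OF t R1(1)] Mok1 R1(2) urep1[OF t] nd1[OF t] inj])
  have c2: "\<forall>(V, ps)\<in>X_atlas. Cinf_on (MP2 ` (A \<inter> MU2 \<inter> uM t -` V)) (ps \<circ> uM t \<circ> inv_into MU2 MP2)
      \<and> Cinf_on (ps ` (uM t ` A \<inter> V \<inter> inv_into A (uM t) -` MU2)) (MP2 \<circ> inv_into A (uM t) \<circ> inv_into V ps)"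
    by (rule cdata.all_X[OF cdata2[OF t R2(1)] Mok2 R2(2) urep2[OF t] nd2[OF t] inj])
  have c3: "\<forall>(V, ps)\<in>X_atlas. Cinf_on (MP3 ` (A \<inter> MU3 \<inter> uM t -` V)) (ps \<circ> uM t \<circ> inv_into MU3 MP3)
      \<and> Cinf_on (ps ` (uM t ` A \<inter> V \<inter> inv_into A (uM t) -` MU3)) (MP3 \<circ> inv_into A (uM t) \<circ> inv_into V ps)"
    by (rule cdata.all_X[OF cdata3[OF t R3(1)] Mok3 R3(2) urep3[OF t] nd3[OF t] inj])
  have c4: "\<forall>(V, ps)\<in>X_atlas. Cinf_on (MP4 ` (A \<inter> MU4 \<inter> uM t -` V)) (ps \<circ> uM t \<circ> inv_into MU4 MP4)
      \<and> Cinf_on (ps ` (uM t ` A \<inter> V \<inter> inv_into A (uM t) -` MU4)) (MP4 \<circ> inv_into A (uM t) \<circ> inv_into V ps)"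
    by (rule cdata.all_X[OF cdata4[OF t R4(1)] Mok4 R4(2) urep4[OF t] nd4[OF t] inj])
  show ?thesis
    unfolding smooth_map_def M_atlas_eq using c1 c2 c3 c4 by fastforce
qed

lemma sm_Mplus:
  assumes t: "t \<noteq> 0" and inj: "inj_on (uM t) Mplus"
  shows "smooth_map M_atlas X_atlas Mplus (uM t) \<and> smooth_map X_atlas M_atlas (uM t ` Mplus) (inv_into Mplus (uM t))"
  by (rule sm_gen[OF t inj _ reg1(1) _ reg2(1) _ reg3(1) _ reg4(1)]) auto

lemma sm_Mminus:
  assumes t: "t \<noteq> 0" and inj: "inj_on (uM t) Mminus"
  shows "smooth_map M_atlas X_atlas Mminus (uM t) \<and> smooth_map X_atlas M_atlas (uM t ` Mminus) (inv_into Mminus (uM t))"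
  by (rule sm_gen[OF t inj _ reg1(2) _ reg2(2) _ reg3(2) _ reg4(2)]) auto

definition hn :: "complex \<times> complex \<Rightarrow> complex" where
  "hn v = fst v * cnj (fst v) + snd v * cnj (snd v)"
definition ip :: "complex \<times> complex \<Rightarrow> complex \<times> complex \<Rightarrow> complex" where
  "ip v w = fst v * cnj (fst w) + snd v * cnj (snd w)"
definition dt :: "complex \<times> complex \<Rightarrow> complex \<times> complex \<Rightarrow> complex" where
  "dt v w = fst v * snd w - snd v * fst w"
definition Tm :: "complex \<Rightarrow> complex \<Rightarrow> complex \<times> complex \<Rightarrow> complex \<times> complex" where
  "Tm al be v = (al * fst v + be * snd v, - cnj be * fst v + cnj al * snd v)"
definition w1 :: "complex \<Rightarrow> complex \<Rightarrow> complex \<times> complex" where "w1 t a = (- (a * t), 1)"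
definition w2 :: "complex \<Rightarrow> complex \<Rightarrow> complex \<times> complex" where "w2 t a = (- t, cnj a)"
definition cf :: "sphere \<Rightarrow> complex \<times> complex" where
  "cf d = (case d of None \<Rightarrow> (0, -1) | Some d' \<Rightarrow> (1, d'))"
definition Pv :: "complex \<Rightarrow> sphere \<Rightarrow> complex \<Rightarrow> complex \<times> complex" where
  "Pv t d a = Tm (fst (cf d)) (snd (cf d)) (w1 t a)"
definition Qv :: "complex \<Rightarrow> sphere \<Rightarrow> complex \<Rightarrow> complex \<times> complex" where
  "Qv t d a = Tm (fst (cf d)) (snd (cf d)) (w2 t a)"
definition proj :: "complex \<times> complex \<Rightarrow> sphere" where "proj v = pfrac (fst v) (snd v)"

lemma hn_Tm: "hn (Tm al be v) = (al * cnj al + be * cnj be) * hn v"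
  by (simp add: hn_def Tm_def algebra_simps)
lemma ip_Tm: "ip (Tm al be v) (Tm al be w) = (al * cnj al + be * cnj be) * ip v w"
  by (simp add: ip_def Tm_def algebra_simps)
lemma dt_Tm: "dt (Tm al be v) (Tm al be w) = (al * cnj al + be * cnj be) * dt v w"
  by (simp add: dt_def Tm_def algebra_simps)
definition sc :: "complex \<Rightarrow> complex \<times> complex \<Rightarrow> complex \<times> complex" where
  "sc la v = (la * fst v, la * snd v)"
lemma hn_sc: "hn (sc la v) = la * cnj la * hn v"
  by (simp add: hn_def sc_def algebra_simps)
lemma ip_sc: "ip (sc la v) (sc mu w) = la * cnj mu * ip v w"
  by (simp add: ip_def sc_def algebra_simps)
lemma dt_sc: "dt (sc la v) (sc mu w) = la * mu * dt v w"
  by (simp add: dt_def sc_def algebra_simps)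

lemma u_hom:
  assumes t: "t \<noteq> 0"
  shows "uM t (d, Some a) = (proj (Pv t d a), proj (Qv t d a))"
proof (cases d)
  case None
  show ?thesis
  proof (cases "a = 0")
    case True thus ?thesis using None t
      by (simp add: uM_def proj_def Pv_def Qv_def Tm_def w1_def w2_def cf_def pfrac_def antip_def)
  next
    case False thus ?thesis using None t
      by (simp add: uM_def proj_def Pv_def Qv_def Tm_def w1_def w2_def cf_def pfrac_def)
  qed
next
  case (Some d')
  have "uM t (d, Some a) = uM t (io1 (d', a))" by (simp add: io1_def Some)
  also have "\<dots> = (pfrac (xN1 t (d', a)) (xD1 t (d', a)), pfrac (yN1 t (d', a)) (yD1 t (d', a)))"
    by (rule urep1[OF t])
  also have "\<dots> = (proj (Pv t d a), proj (Qv t d a))"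
    by (simp add: Some proj_def Pv_def Qv_def Tm_def w1_def w2_def cf_def chart_defs algebra_simps)
  finally show ?thesis .
qed


lemma mono_aux:
  fixes x y S :: real
  assumes "0 \<le> x" "x < y" "y < 1" "S > 0"
  shows "(x * S + 1) * (S + x) * (1 - y)^2 < (y * S + 1) * (S + y) * (1 - x)^2"
proof -
  have a: "x * S + 1 \<le> y * S + 1" using assms by (simp add: mult_right_mono)
  have b: "S + x < S + y" using assms by simp
  have f: "(x * S + 1) * (S + x) < (y * S + 1) * (S + y)"
    by (rule mult_le_less_imp_less[OF a b]) (use assms in \<open>auto intro: add_nonneg_pos add_nonneg_nonneg\<close>)
  have g: "(1 - y)^2 < (1 - x)^2"
    by (rule power_strict_mono) (use assms in auto)
  show ?thesis
    by (rule mult_strict_mono[OF f g]) (use assms in \<open>auto intro!: mult_pos_pos add_pos_nonneg\<close>)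
qed

lemma rho_eq:
  fixes r r' S :: real
  assumes "0 \<le> r" "r < 1" "0 \<le> r'" "r' < 1" "S > 0"
    and e: "(r' * S + 1) * (S + r') * (1 - r)^2 = (r * S + 1) * (S + r) * (1 - r')^2"
  shows "r = r'"
proof (rule linorder_cases[of r r'])
  assume "r < r'" thus ?thesis using mono_aux[of r r' S] assms by linarith
next
  assume "r' < r" thus ?thesis using mono_aux[of r' r S] assms by linarith
qed

lemma hn_w1: "hn (w1 t a) = of_real ((cmod a)^2 * (cmod t)^2 + 1)"
proof -
  have "hn (w1 t a) = (a * cnj a) * (t * cnj t) + 1" by (simp add: hn_def w1_def algebra_simps)
  thus ?thesis by (simp add: cnj_sq_real)
qed
lemma hn_w2: "hn (w2 t a) = of_real ((cmod t)^2 + (cmod a)^2)"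
proof -
  have "hn (w2 t a) = t * cnj t + a * cnj a" by (simp add: hn_def w2_def algebra_simps)
  thus ?thesis by (simp add: cnj_sq_real)
qed
lemma ip_w: "ip (w1 t a) (w2 t a) = a * of_real ((cmod t)^2 + 1)"
proof -
  have "ip (w1 t a) (w2 t a) = a * (t * cnj t + 1)" by (simp add: ip_def w1_def w2_def algebra_simps)
  thus ?thesis by (simp add: cnj_sq_real)
qed
lemma dt_w: "dt (w1 t a) (w2 t a) = t * of_real (1 - (cmod a)^2)"
proof -
  have "dt (w1 t a) (w2 t a) = t * (1 - a * cnj a)" by (simp add: dt_def w1_def w2_def algebra_simps)
  thus ?thesis by (simp add: cnj_sq_real)
qed

definition RR :: "sphere \<Rightarrow> real" where "RR d = (cmod (fst (cf d)))^2 + (cmod (snd (cf d)))^2"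
lemma RR_pos: "RR d > 0" by (cases d) (auto simp: RR_def cf_def add_pos_nonneg)
lemma rr_eq: "fst (cf d) * cnj (fst (cf d)) + snd (cf d) * cnj (snd (cf d)) = of_real (RR d)"
  by (simp add: RR_def cnj_sq_real)

lemma Pv_Tm: "Pv t d a = Tm (fst (cf d)) (snd (cf d)) (w1 t a)" by (simp add: Pv_def)
lemma Qv_Tm: "Qv t d a = Tm (fst (cf d)) (snd (cf d)) (w2 t a)" by (simp add: Qv_def)

lemma inj_core:
  assumes t: "t \<noteq> 0" and a: "cmod a < 1" and a': "cmod a' < 1"
    and P: "Pv t d' a' = sc la (Pv t d a)" and Q: "Qv t d' a' = sc mu (Qv t d a)"
  shows "la * mu = of_real (RR d' / RR d) \<and> la * cnj la = of_real (RR d' / RR d) \<and> cmod a = cmod a'"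
proof -
  define r where "r = (cmod a)^2"
  define r' where "r' = (cmod a')^2"
  define S where "S = (cmod t)^2"
  define L where "L = (cmod la)^2"
  define M where "M = (cmod mu)^2"
  have S: "S > 0" using t by (simp add: S_def)
  have r: "0 \<le> r" "r < 1" using a by (auto simp: r_def abs_square_less_1)
  have r': "0 \<le> r'" "r' < 1" using a' by (auto simp: r'_def abs_square_less_1)
  have R: "RR d > 0" "RR d' > 0" by (rule RR_pos)+
  have E1c: "of_real (RR d') * hn (w1 t a') = la * cnj la * (of_real (RR d) * hn (w1 t a))"
    using arg_cong[OF P, of hn] by (simp add: Pv_Tm hn_Tm hn_sc rr_eq)
  have E2c: "of_real (RR d') * hn (w2 t a') = mu * cnj mu * (of_real (RR d) * hn (w2 t a))"
    using arg_cong[OF Q, of hn] by (simp add: Qv_Tm hn_Tm hn_sc rr_eq)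
  have E4c: "of_real (RR d') * dt (w1 t a') (w2 t a') = la * mu * (of_real (RR d) * dt (w1 t a) (w2 t a))"
    using arg_cong2[OF P Q, of dt] by (simp add: Pv_Tm Qv_Tm dt_Tm dt_sc rr_eq)
  have E1: "RR d' * (r' * S + 1) = L * (RR d * (r * S + 1))"
  proof -
    have "complex_of_real (RR d' * (r' * S + 1)) = complex_of_real (L * (RR d * (r * S + 1)))"
      using E1c by (simp add: hn_w1 r_def r'_def S_def L_def cnj_sq_real)
    thus ?thesis using of_real_eq_iff by blast
  qed
  have E2: "RR d' * (S + r') = M * (RR d * (S + r))"
  proof -
    have "complex_of_real (RR d' * (S + r')) = complex_of_real (M * (RR d * (S + r)))"
      using E2c by (simp add: hn_w2 r_def r'_def S_def M_def cnj_sq_real)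
    thus ?thesis using of_real_eq_iff by blast
  qed
  have lm: "la * mu = of_real (RR d' * (1 - r') / (RR d * (1 - r)))"
  proof -
    have "t * of_real (RR d' * (1 - r')) = t * (la * mu * of_real (RR d * (1 - r)))"
      using E4c by (simp add: dt_w r_def r'_def algebra_simps)
    hence "of_real (RR d' * (1 - r')) = la * mu * of_real (RR d * (1 - r))" using t by simp
    moreover have "RR d * (1 - r) \<noteq> 0" using R r by simp
    ultimately show ?thesis by (simp add: field_simps)
  qed
  have LM: "L * M = (RR d' * (1 - r') / (RR d * (1 - r)))^2"
  proof -
    have "cmod (la * mu) = \<bar>RR d' * (1 - r') / (RR d * (1 - r))\<bar>" using lm by (simp only: norm_of_real)
    hence "(cmod (la * mu))^2 = (RR d' * (1 - r') / (RR d * (1 - r)))^2" by (simp add: power_divide power2_abs)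
    thus ?thesis by (simp add: L_def M_def norm_mult power_mult_distrib)
  qed
  have LM2: "L * M * (RR d * (1 - r))^2 = (RR d' * (1 - r'))^2"
  proof -
    have "RR d * (1 - r) \<noteq> 0" using R r by simp
    thus ?thesis unfolding LM by (simp add: power_divide)
  qed
  have "(r' * S + 1) * (S + r') * (1 - r)^2 = (r * S + 1) * (S + r) * (1 - r')^2"
  proof -
    have "(RR d' * (r' * S + 1)) * (RR d' * (S + r')) * (RR d * (1 - r))^2
        = (L * M * (RR d * (1 - r))^2) * (RR d * (r * S + 1)) * (RR d * (S + r))"
      unfolding E1 E2 by (simp add: algebra_simps)
    also have "\<dots> = (RR d' * (1 - r'))^2 * (RR d * (r * S + 1)) * (RR d * (S + r))"
      unfolding LM2 ..
    finally have "(RR d' * RR d)^2 * ((r' * S + 1) * (S + r') * (1 - r)^2)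
        = (RR d' * RR d)^2 * ((r * S + 1) * (S + r) * (1 - r')^2)"
      by (simp add: algebra_simps power2_eq_square)
    moreover have "(RR d' * RR d)^2 \<noteq> 0" using R by simp
    ultimately show ?thesis by simp
  qed
  hence rr: "r = r'" using rho_eq r r' S by blast
  have pos: "r * S + 1 > 0" using r S by (metis add_nonneg_pos less_eq_real_def mult_nonneg_nonneg zero_less_one)
  have "(RR d' - L * RR d) * (r * S + 1) = 0" using E1 unfolding rr[symmetric] by (simp add: algebra_simps)
  hence "RR d' = L * RR d" using pos by simp
  hence Lv: "L = RR d' / RR d" using R by (simp add: field_simps)
  have "la * mu = of_real (RR d' / RR d)" using lm rr r' by simp
  moreover have "la * cnj la = of_real (RR d' / RR d)" using Lv by (simp add: L_def cnj_sq_real)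
  moreover have "cmod a = cmod a'" using rr by (simp add: r_def r'_def)
  ultimately show ?thesis by blast
qed


lemma Tm_adj: "Tm (cnj al) (- be) (Tm al be v) = sc (al * cnj al + be * cnj be) v"
  by (simp add: Tm_def sc_def algebra_simps)

lemma Tm_ne0:
  assumes "al * cnj al + be * cnj be \<noteq> 0" "v \<noteq> (0, 0)"
  shows "Tm al be v \<noteq> (0, 0)"
proof
  assume "Tm al be v = (0, 0)"
  hence "sc (al * cnj al + be * cnj be) v = (0, 0)" using Tm_adj[of al be v] by (simp add: Tm_def)
  thus False using assms by (simp add: sc_def prod_eq_iff)
qed

lemma Pv_ne0: "t \<noteq> 0 \<Longrightarrow> Pv t d a \<noteq> (0, 0)"
  unfolding Pv_def by (rule Tm_ne0) (use RR_pos[of d] in \<open>auto simp: rr_eq w1_def\<close>)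
lemma Qv_ne0: "t \<noteq> 0 \<Longrightarrow> Qv t d a \<noteq> (0, 0)"
  unfolding Qv_def by (rule Tm_ne0) (use RR_pos[of d] in \<open>auto simp: rr_eq w2_def\<close>)

lemma proj_eq_sc:
  assumes "v \<noteq> (0, 0)" "v' \<noteq> (0, 0)" "proj v = proj v'"
  shows "\<exists>la. la \<noteq> 0 \<and> v' = sc la v"
proof -
  obtain x y where v: "v = (x, y)" by fastforce
  obtain x' y' where v': "v' = (x', y')" by fastforce
  have e: "x * y' = x' * y" using assms pfrac_eq[of x y x' y'] by (auto simp: v v' proj_def)
  show ?thesis
  proof (cases "x = 0")
    case False
    have "v' = sc (x' / x) v" using e False by (simp add: v v' sc_def field_simps)
    moreover have "x' / x \<noteq> 0" using e False assms(2) by (auto simp: v v')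
    ultimately show ?thesis by blast
  next
    case True
    hence y: "y \<noteq> 0" using assms(1) v by simp
    have "v' = sc (y' / y) v" using e True y by (simp add: v v' sc_def field_simps)
    moreover have "y' / y \<noteq> 0" using e True y assms(2) by (auto simp: v v')
    ultimately show ?thesis by blast
  qed
qed

lemma star_rel:
  assumes t: "t \<noteq> 0" and a: "cmod a < 1" and a': "cmod a' < 1" and la: "la \<noteq> 0"
    and P: "Pv t d' a' = sc la (Pv t d a)" and Q: "Qv t d' a' = sc mu (Qv t d a)"
  shows "mu = cnj la \<and> cnj la * a' = la * a \<and> cmod a = cmod a'"
proof -
  note c = inj_core[OF t a a' P Q]
  have mu: "mu = cnj la" using c la by (metis mult_left_cancel)
  have E3c: "of_real (RR d') * ip (w1 t a') (w2 t a') = la * cnj mu * (of_real (RR d) * ip (w1 t a) (w2 t a))"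
    using arg_cong2[OF P Q, of ip] by (simp add: Pv_Tm Qv_Tm ip_Tm ip_sc rr_eq)
  hence "of_real (RR d') * a' * of_real ((cmod t)^2 + 1) = la * la * (of_real (RR d) * a) * of_real ((cmod t)^2 + 1)"
    by (simp add: ip_w mu algebra_simps)
  moreover have "complex_of_real ((cmod t)^2 + 1) \<noteq> 0"
  proof -
    have "(cmod t)^2 + 1 > 0" by (metis add_nonneg_pos zero_le_power2 zero_less_one)
    thus ?thesis by (metis less_irrefl of_real_eq_0_iff)
  qed
  ultimately have "of_real (RR d') * a' = la * la * (of_real (RR d) * a)" by simp
  hence "la * cnj la * of_real (RR d) * a' = la * la * (of_real (RR d) * a)"
    using c RR_pos[of d] by (simp add: field_simps)
  hence "la * (of_real (RR d) * (cnj la * a' - la * a)) = 0" by (simp add: algebra_simps)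
  hence "cnj la * a' = la * a" using la RR_pos[of d] by simp
  thus ?thesis using mu c by blast
qed


lemma Pv_Some: "Pv t (Some d) a = (d - a * t, 1 + cnj d * a * t)"
  by (simp add: Pv_def Tm_def cf_def w1_def algebra_simps)
lemma Qv_Some: "Qv t (Some d) a = (d * cnj a - t, cnj a + cnj d * t)"
  by (simp add: Qv_def Tm_def cf_def w2_def algebra_simps)
lemma Pv_None: "Pv t None a = (-1, - (a * t))"
  by (simp add: Pv_def Tm_def cf_def w1_def)
lemma Qv_None: "Qv t None a = (- cnj a, - t)"
  by (simp add: Qv_def Tm_def cf_def w2_def)

lemma inj_cases:
  assumes t: "t \<noteq> 0" and la: "la \<noteq> 0"
    and P: "Pv t d' a' = sc la (Pv t d a)" and Q: "Qv t d' a' = sc (cnj la) (Qv t d a)"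
    and st: "cnj la * a' = la * a" and aa: "cmod a = cmod a'"
  shows "d = d' \<and> a = a'"
proof (cases d)
  case None note dN = None
  show ?thesis
  proof (cases d')
    case None
    hence "la = 1" using P dN by (simp add: Pv_None sc_def)
    thus ?thesis using st None dN by simp
  next
    case (Some d2)
    have e1: "d2 - a' * t + la = 0" and e2: "1 + cnj d2 * a' * t + la * a * t = 0"
      using P dN Some by (auto simp: Pv_None Pv_Some sc_def)
    have e3: "cnj la * a' - la * a = 0" using st by simp
    have "1 + (a' * cnj a') * (t * cnj t) = (1 + cnj d2 * a' * t + la * a * t) - a' * t * cnj (d2 - a' * t + la)
        + t * (cnj la * a' - la * a)"
      by (simp add: algebra_simps)
    also have "\<dots> = 0" using e1 e2 e3 by simp
    finally show ?thesis using one_plus_sq_ne0[of a' t] by simp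
  qed
next
  case (Some d1) note dS = Some
  show ?thesis
  proof (cases d')
    case None
    have r1: "-1 = la * (d1 - a * t)" and r2: "- (a' * t) = la * (1 + cnj d1 * a * t)"
      using P dS None by (auto simp: Pv_None Pv_Some sc_def)
    have e1: "la * (d1 - a * t) + 1 = 0" by (subst r1[symmetric]) simp
    have e2: "la * (1 + cnj d1 * a * t) + a' * t = 0" by (subst r2[symmetric]) simp
    have e3: "cnj la * a' - la * a = 0" using st by simp
    have "la * (cnj la * (1 + (a * cnj a) * (t * cnj t)))
       = cnj la * (la * (1 + cnj d1 * a * t) + a' * t) - t * (cnj la * a' - la * a)
         - la * a * t * cnj (la * (d1 - a * t) + 1)"
      by (simp add: algebra_simps)
    also have "\<dots> = 0" using e1 e2 e3 by simp
    finally show ?thesis using one_plus_sq_ne0[of a t] la by simp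
  next
    case (Some d2)
    have p1: "d2 - a' * t = la * (d1 - a * t)" and p2: "1 + cnj d2 * a' * t = la * (1 + cnj d1 * a * t)"
      using P dS Some by (auto simp: Pv_Some sc_def)
    have q2: "cnj a' + cnj d2 * t = cnj la * (cnj a + cnj d1 * t)"
      using Q dS Some by (auto simp: Qv_Some sc_def)
    have "cnj a' * (1 + t * cnj t) - cnj la * cnj a * (1 + t * cnj t)
       = (cnj a' + cnj d2 * t - cnj la * (cnj a + cnj d1 * t)) - t * cnj (d2 - a' * t - la * (d1 - a * t))"
      by (simp add: algebra_simps)
    also have "\<dots> = 0" using p1 q2 by simp
    finally have "(cnj a' - cnj la * cnj a) * (1 + t * cnj t) = 0" by (simp add: algebra_simps)
    moreover have "1 + t * cnj t \<noteq> 0" using one_plus_sq_ne0[of 1 t] by simp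
    ultimately have "cnj a' = cnj la * cnj a" by simp
    hence a'e: "a' = la * a" by (metis complex_cnj_cnj complex_cnj_mult)
    have "la = 1"
    proof (cases "a' = 0")
      case True
      hence "a = 0" using aa by simp
      thus ?thesis using p2 True by simp
    next
      case False
      have "(cnj la - 1) * a' = 0" using st a'e by (simp add: algebra_simps)
      hence "cnj la = 1" using False by simp
      thus ?thesis by (metis complex_cnj_cnj complex_cnj_one)
    qed
    thus ?thesis using p1 a'e dS Some by simp
  qed
qed

lemma u_inj_Mplus:
  assumes t: "t \<noteq> 0" shows "inj_on (uM t) Mplus"
proof (rule inj_onI)
  fix m m' assume m: "m \<in> Mplus" and m': "m' \<in> Mplus" and eq: "uM t m = uM t m'"
  obtain d a where md: "m = (d, Some a)" and a: "cmod a < 1" using m by (auto simp: Mplus_def)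
  obtain d' a' where md': "m' = (d', Some a')" and a': "cmod a' < 1" using m' by (auto simp: Mplus_def)
  have pe: "proj (Pv t d a) = proj (Pv t d' a')" and qe: "proj (Qv t d a) = proj (Qv t d' a')"
    using eq by (simp_all add: md md' u_hom[OF t])
  obtain la where la: "la \<noteq> 0" "Pv t d' a' = sc la (Pv t d a)"
    using proj_eq_sc[OF Pv_ne0[OF t] Pv_ne0[OF t] pe] by blast
  obtain mu where mu: "mu \<noteq> 0" "Qv t d' a' = sc mu (Qv t d a)"
    using proj_eq_sc[OF Qv_ne0[OF t] Qv_ne0[OF t] qe] by blast
  have sr: "mu = cnj la \<and> cnj la * a' = la * a \<and> cmod a = cmod a'"
    by (rule star_rel[OF t a a' la mu(2)])
  have "d = d' \<and> a = a'"
    by (rule inj_cases[OF t la(1) la(2)]) (use mu sr in auto)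
  thus "m = m'" by (simp add: md md')
qed


lemma proj_sc: "la \<noteq> 0 \<Longrightarrow> v \<noteq> (0, 0) \<Longrightarrow> proj (sc la v) = proj v"
  by (cases v) (auto simp: proj_def sc_def pfrac_eq)

lemma Tm_sc: "Tm al be (sc c v) = sc c (Tm al be v)"
  by (simp add: Tm_def sc_def algebra_simps)

lemma realize:
  assumes t: "t \<noteq> 0" and ab: "(al, be) \<noteq> (0, 0)"
  shows "\<exists>d a'. cmod a' = cmod a \<and> proj (Pv t d a') = proj (Tm al be (w1 t a))
      \<and> proj (Qv t d a') = proj (Tm al be (w2 t a))"
proof (cases "al = 0")
  case False
  define d where "d = be / cnj al"
  define a' where "a' = (al / cnj al) * a"
  have cal: "cnj al \<noteq> 0" using False by simp
  have n: "cmod a' = cmod a" using False by (simp add: a'_def norm_mult norm_divide)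
  have ca': "cnj a' = (cnj al / al) * cnj a" by (simp add: a'_def)
  have cd: "cnj d = cnj be / al" by (simp add: d_def)
  have e1: "al * (- (a * t)) + be * 1 = cnj al * (d - a' * t)"
    using cal by (simp add: d_def a'_def field_simps)
  have e2: "- cnj be * (- (a * t)) + cnj al * 1 = cnj al * (1 + cnj d * a' * t)"
    using False cal by (simp add: cd a'_def field_simps)
  have e3: "al * (- t) + be * cnj a = al * (d * cnj a' - t)"
    using False cal by (simp add: ca' d_def field_simps)
  have e4: "- cnj be * (- t) + cnj al * cnj a = al * (cnj a' + cnj d * t)"
    using False by (simp add: ca' cd field_simps)
  have "Tm al be (w1 t a) = sc (cnj al) (Pv t (Some d) a')"
    by (simp only: Tm_def w1_def sc_def Pv_Some fst_conv snd_conv e1 e2)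
  moreover have "Tm al be (w2 t a) = sc al (Qv t (Some d) a')"
    by (simp only: Tm_def w2_def sc_def Qv_Some fst_conv snd_conv e3 e4)
  ultimately show ?thesis using n False cal Pv_ne0[OF t] Qv_ne0[OF t] proj_sc by metis
next
  case True
  hence be: "be \<noteq> 0" using ab by simp
  define a' where "a' = (cnj be / be) * a"
  have n: "cmod a' = cmod a" using be by (simp add: a'_def norm_mult norm_divide)
  have ca': "cnj a' = (be / cnj be) * cnj a" by (simp add: a'_def)
  have cbe: "cnj be \<noteq> 0" using be by simp
  have e1: "al * (- (a * t)) + be * 1 = - be * (-1)" using True by simp
  have e2: "- cnj be * (- (a * t)) + cnj al * 1 = - be * (- (a' * t))"
    using True be by (simp add: a'_def field_simps)
  have e3: "al * (- t) + be * cnj a = - cnj be * (- cnj a')"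
    using True cbe by (simp add: ca' field_simps)
  have e4: "- cnj be * (- t) + cnj al * cnj a = - cnj be * (- t)" using True by simp
  have "Tm al be (w1 t a) = sc (- be) (Pv t None a')"
    by (simp only: Tm_def w1_def sc_def Pv_None fst_conv snd_conv e1 e2)
  moreover have "Tm al be (w2 t a) = sc (- cnj be) (Qv t None a')"
    by (simp only: Tm_def w2_def sc_def Qv_None fst_conv snd_conv e3 e4)
  moreover have "- be \<noteq> 0" "- cnj be \<noteq> 0" using be by auto
  ultimately show ?thesis using n Pv_ne0[OF t] Qv_ne0[OF t] proj_sc by metis
qed

definition rep :: "sphere \<Rightarrow> complex \<times> complex" where
  "rep x = (case x of None \<Rightarrow> (1, 0) | Some z \<Rightarrow> (z, 1))"
lemma proj_rep: "proj (rep x) = x" by (cases x) (auto simp: rep_def proj_def pfrac_def)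
lemma rep_ne0: "rep x \<noteq> (0, 0)" by (cases x) (auto simp: rep_def)

lemma dt_rep: "x \<noteq> y \<Longrightarrow> dt (rep x) (rep y) \<noteq> 0"
proof
  assume "x \<noteq> y" "dt (rep x) (rep y) = 0"
  hence "fst (rep x) * snd (rep y) = fst (rep y) * snd (rep x)" by (simp add: dt_def algebra_simps)
  hence "proj (rep x) = proj (rep y)" using rep_ne0[of x] rep_ne0[of y]
    by (auto simp: proj_def pfrac_eq prod_eq_iff)
  thus False using \<open>x \<noteq> y\<close> by (simp add: proj_rep)
qed

definition rroot :: "real \<Rightarrow> real" where
  "rroot k = 2 * k / (2 * k + 1 + sqrt (4 * k + 1))"

lemma rroot:
  assumes "k \<ge> 0"
  shows "0 \<le> rroot k" "rroot k < 1" "rroot k = k * (1 - rroot k)^2"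
proof -
  define q where "q = sqrt (4 * k + 1)"
  have q1: "q \<ge> 1" using assms by (simp add: q_def)
  have q2: "q^2 = 4 * k + 1" using assms by (simp add: q_def)
  have D: "2 * k + 1 + q > 0" using assms q1 by simp
  show "0 \<le> rroot k" using assms D by (simp add: rroot_def q_def[symmetric])
  show "rroot k < 1" using assms D q1 by (simp add: rroot_def q_def[symmetric] divide_less_eq)
  have rk: "rroot k = 2 * k / (2 * k + 1 + q)" by (simp add: rroot_def q_def)
  have "1 - rroot k = (1 + q) / (2 * k + 1 + q)" using D by (simp add: rk field_simps)
  hence "k * (1 - rroot k)^2 = k * (1 + q)^2 / (2 * k + 1 + q)^2" by (simp add: power_divide)
  also have "k * (1 + q)^2 = 2 * k * (2 * k + 1 + q)" using q2 by (simp add: power2_eq_square algebra_simps)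
  also have "2 * k * (2 * k + 1 + q) / (2 * k + 1 + q)^2 = rroot k"
    using D by (simp add: rk power2_eq_square)
  finally show "rroot k = k * (1 - rroot k)^2" by simp
qed

lemma surj_core:
  assumes t: "t \<noteq> 0" and xy: "x \<noteq> y"
  shows "\<exists>m \<in> Mplus. uM t m = (x, y)"
proof -
  obtain x1 x2 where X: "rep x = (x1, x2)" by fastforce
  obtain y1 y2 where Y: "rep y = (y1, y2)" by fastforce
  define De where "De = x1 * y2 - x2 * y1"
  have De: "De \<noteq> 0" using dt_rep[OF xy] by (simp add: X Y dt_def De_def)
  define eta where "eta = cnj x1 * y1 + cnj x2 * y2"
  define S where "S = (cmod t)^2"
  define k where "k = S * (cmod eta)^2 / ((cmod De)^2 * (1 + S)^2)"
  have k: "k \<ge> 0" by (simp add: k_def S_def)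
  define r where "r = rroot k"
  note rr = rroot[OF k, folded r_def]
  have S1: "1 + S > 0" by (simp add: S_def add_pos_nonneg)
  define c where "c = (1 - r) / (1 + S)"
  have c0: "c \<ge> 0" using S1 rr by (simp add: c_def)
  define a where "a = cnj eta * cnj t * of_real c / cnj De"
  have aa: "(cmod a)^2 = r"
  proof -
    have "cmod a = cmod eta * cmod t * c / cmod De"
      using c0 by (simp add: a_def norm_mult norm_divide)
    hence "(cmod a)^2 = (cmod eta)^2 * S * (1 - r)^2 / ((cmod De)^2 * (1 + S)^2)"
      by (simp add: c_def power_divide power_mult_distrib S_def)
    also have "\<dots> = k * (1 - r)^2" by (simp add: k_def)
    also have "\<dots> = r" using rr by simp
    finally show ?thesis .
  qed
  hence acnj: "a * cnj a = of_real r" by (simp add: cnj_sq_real)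
  have a1: "cmod a < 1" using aa rr by (metis abs_norm_cancel abs_square_less_1)
  have ta: "t * cnj t = of_real S" by (simp add: S_def cnj_sq_real)
  have adef: "cnj a * De = eta * t * of_real c"
    using De by (simp add: a_def field_simps)
  define al where "al = cnj x2 - x1 * cnj a * cnj t"
  define be where "be = x1 + cnj x2 * a * t"
  have hx: "hn (rep x) \<noteq> 0"
  proof -
    have "hn (rep x) = of_real ((cmod x1)^2 + (cmod x2)^2)" by (simp add: X hn_def cnj_sq_real)
    moreover have "(cmod x1)^2 + (cmod x2)^2 > 0" using rep_ne0[of x] X
      by (auto simp: add_pos_nonneg add_nonneg_pos)
    ultimately show ?thesis by (metis less_irrefl of_real_eq_0_iff)
  qed
  have ab: "(al, be) \<noteq> (0, 0)"
  proof
    assume "(al, be) = (0, 0)"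
    hence "al * cnj al + be * cnj be = 0" by simp
    moreover have "al * cnj al + be * cnj be = hn (rep x) * (1 + (a * cnj a) * (t * cnj t))"
      by (simp add: al_def be_def X hn_def algebra_simps)
    ultimately show False using hx one_plus_sq_ne0[of a t] by simp
  qed
  have T1: "Tm al be (w1 t a) = sc (1 + (a * cnj a) * (t * cnj t)) (rep x)"
    by (simp add: Tm_def w1_def al_def be_def X sc_def algebra_simps)
  have cS: "of_real c * (1 + of_real S) = (of_real (1 - r) :: complex)"
  proof -
    have "c * (1 + S) = 1 - r" using S1 by (simp add: c_def)
    hence "complex_of_real (c * (1 + S)) = of_real (1 - r)" by simp
    thus ?thesis by simp
  qed
  have f1: "De * (al * (- t) + be * cnj a) = t * of_real (1 - r) * hn (rep x) * y1"
  proof -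
    have "De * (al * (- t) + be * cnj a) = x1 * (cnj a * De) * (1 + t * cnj t) - t * cnj x2 * De * (1 - a * cnj a)"
      by (simp add: al_def be_def algebra_simps)
    also have "\<dots> = x1 * (eta * t * of_real c) * (1 + of_real S) - t * cnj x2 * De * (1 - of_real r)"
      by (simp only: adef ta acnj)
    also have "\<dots> = t * (x1 * eta * (of_real c * (1 + of_real S)) - cnj x2 * De * (1 - of_real r))"
      by (simp add: algebra_simps)
    also have "\<dots> = t * of_real (1 - r) * (x1 * eta - cnj x2 * De)"
      unfolding cS by (simp add: algebra_simps)
    also have "x1 * eta - cnj x2 * De = hn (rep x) * y1"
      by (simp add: eta_def De_def hn_def X algebra_simps)
    finally show ?thesis by (simp add: algebra_simps)
  qed
  have f2: "De * (- cnj be * (- t) + cnj al * cnj a) = t * of_real (1 - r) * hn (rep x) * y2"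
  proof -
    have "De * (- cnj be * (- t) + cnj al * cnj a) = x2 * (cnj a * De) * (1 + t * cnj t) + t * cnj x1 * De * (1 - a * cnj a)"
      by (simp add: al_def be_def algebra_simps)
    also have "\<dots> = x2 * (eta * t * of_real c) * (1 + of_real S) + t * cnj x1 * De * (1 - of_real r)"
      by (simp only: adef ta acnj)
    also have "\<dots> = t * (x2 * eta * (of_real c * (1 + of_real S)) + cnj x1 * De * (1 - of_real r))"
      by (simp add: algebra_simps)
    also have "\<dots> = t * of_real (1 - r) * (x2 * eta + cnj x1 * De)"
      unfolding cS by (simp add: algebra_simps)
    also have "x2 * eta + cnj x1 * De = hn (rep x) * y2"
      by (simp add: eta_def De_def hn_def X algebra_simps)
    finally show ?thesis by (simp add: algebra_simps)
  qed
  define sy where "sy = t * of_real (1 - r) * hn (rep x) / De"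
  have T2: "Tm al be (w2 t a) = sc sy (rep y)"
  proof -
    have "al * (- t) + be * cnj a = sy * y1" using f1 De by (simp add: sy_def field_simps)
    moreover have "- cnj be * (- t) + cnj al * cnj a = sy * y2" using f2 De by (simp add: sy_def field_simps)
    ultimately show ?thesis by (simp add: Tm_def w2_def sc_def Y)
  qed
  have sy0: "sy \<noteq> 0" using t rr hx De by (simp add: sy_def)
  have sx0: "1 + (a * cnj a) * (t * cnj t) \<noteq> 0" by (rule one_plus_sq_ne0)
  obtain d a' where da: "cmod a' = cmod a" "proj (Pv t d a') = proj (Tm al be (w1 t a))"
      "proj (Qv t d a') = proj (Tm al be (w2 t a))"
    using realize[OF t ab, of a] by blast
  have "uM t (d, Some a') = (x, y)"
    using da T1 T2 proj_sc[OF sx0 rep_ne0] proj_sc[OF sy0 rep_ne0]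
    by (simp add: u_hom[OF t] proj_rep)
  moreover have "(d, Some a') \<in> Mplus" using da a1 by (simp add: Mplus_def)
  ultimately show ?thesis by blast
qed

lemma dt_sc_self: "dt v (sc la v) = 0" by (simp add: dt_def sc_def algebra_simps)

lemma dt_PQ: "dt (Pv t d a) (Qv t d a) = of_real (RR d) * (t * of_real (1 - (cmod a)^2))"
  by (simp add: Pv_Tm Qv_Tm dt_Tm rr_eq dt_w)

lemma Mplus_notdiag:
  assumes t: "t \<noteq> 0" and m: "m \<in> Mplus" shows "uM t m \<notin> Diag"
proof
  assume "uM t m \<in> Diag"
  obtain d a where md: "m = (d, Some a)" and a: "cmod a < 1" using m by (auto simp: Mplus_def)
  have "proj (Pv t d a) = proj (Qv t d a)" using \<open>uM t m \<in> Diag\<close> by (auto simp: md u_hom[OF t] Diag_def)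
  then obtain la where "Qv t d a = sc la (Pv t d a)" using proj_eq_sc[OF Pv_ne0[OF t] Qv_ne0[OF t]] by blast
  hence "dt (Pv t d a) (Qv t d a) = 0" by (simp add: dt_sc_self)
  moreover have "(cmod a)^2 < 1" using a by (simp add: abs_square_less_1)
  hence n: "1 - (cmod a)^2 \<noteq> 0" by simp
  have "dt (Pv t d a) (Qv t d a) \<noteq> 0" unfolding dt_PQ
    by (simp only: mult_eq_0_iff of_real_eq_0_iff de_Morgan_disj) (use RR_pos[of d] t n in auto)
  ultimately show False by simp
qed

lemma K_diag:
  assumes t: "t \<noteq> 0" and m: "m \<in> Kset" shows "uM t m \<in> Diag"
proof -
  obtain d a where md: "m = (d, Some a)" and a: "cmod a = 1" using m by (auto simp: Kset_def)
  have "dt (Pv t d a) (Qv t d a) = 0" using a by (simp add: dt_PQ)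
  hence "fst (Pv t d a) * snd (Qv t d a) = fst (Qv t d a) * snd (Pv t d a)" by (simp add: dt_def algebra_simps)
  hence "proj (Pv t d a) = proj (Qv t d a)"
    using Pv_ne0[OF t, of d a] Qv_ne0[OF t, of d a] by (auto simp: proj_def pfrac_eq prod_eq_iff)
  thus ?thesis by (simp add: md u_hom[OF t] Diag_def)
qed

lemma diag_K:
  assumes t: "t \<noteq> 0" shows "\<exists>m \<in> Kset. uM t m = (x, x)"
proof -
  obtain x1 x2 where X: "rep x = (x1, x2)" by fastforce
  define al where "al = cnj x2 - x1 * cnj t"
  define be where "be = x1 + cnj x2 * t"
  have hx: "hn (rep x) \<noteq> 0"
  proof -
    have "hn (rep x) = of_real ((cmod x1)^2 + (cmod x2)^2)" by (simp add: X hn_def cnj_sq_real)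
    moreover have "(cmod x1)^2 + (cmod x2)^2 > 0" using rep_ne0[of x] X
      by (auto simp: add_pos_nonneg add_nonneg_pos)
    ultimately show ?thesis by (metis less_irrefl of_real_eq_0_iff)
  qed
  have ab: "(al, be) \<noteq> (0, 0)"
  proof
    assume "(al, be) = (0, 0)"
    hence "al * cnj al + be * cnj be = 0" by simp
    moreover have "al * cnj al + be * cnj be = hn (rep x) * (1 + (1 * cnj 1) * (t * cnj t))"
      by (simp add: al_def be_def X hn_def algebra_simps)
    ultimately show False using hx one_plus_sq_ne0[of 1 t] by simp
  qed
  have T1: "Tm al be (w1 t 1) = sc (1 + (1 * cnj 1) * (t * cnj t)) (rep x)"
    by (simp add: Tm_def w1_def al_def be_def X sc_def algebra_simps)
  have w: "w2 t 1 = w1 t 1" by (simp add: w1_def w2_def)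
  obtain d a' where da: "cmod a' = cmod (1::complex)" "proj (Pv t d a') = proj (Tm al be (w1 t 1))"
      "proj (Qv t d a') = proj (Tm al be (w2 t 1))"
    using realize[OF t ab, of 1] by blast
  have sx0: "1 + (1 * cnj 1) * (t * cnj t) \<noteq> 0" by (rule one_plus_sq_ne0)
  have "uM t (d, Some a') = (x, x)"
    using da T1 w proj_sc[OF sx0 rep_ne0] by (simp add: u_hom[OF t] proj_rep)
  moreover have "(d, Some a') \<in> Kset" using da by (simp add: Kset_def)
  ultimately show ?thesis by blast
qed

lemma u_swap:
  assumes t: "t \<noteq> 0" and a: "a \<noteq> 0"
  shows "uM t (d, Some a) = prod.swap (uM t (d, Some (1 / cnj a)))"
proof -
  have w1': "w1 t (1 / cnj a) = sc (1 / cnj a) (w2 t a)" using a by (simp add: w1_def w2_def sc_def)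
  have w2': "w2 t (1 / cnj a) = sc (1 / a) (w1 t a)" using a by (simp add: w1_def w2_def sc_def)
  have "Pv t d (1 / cnj a) = sc (1 / cnj a) (Qv t d a)" by (simp add: Pv_Tm Qv_Tm w1' Tm_sc)
  moreover have "Qv t d (1 / cnj a) = sc (1 / a) (Pv t d a)" by (simp add: Pv_Tm Qv_Tm w2' Tm_sc)
  moreover have "1 / cnj a \<noteq> 0" "1 / a \<noteq> 0" using a by auto
  ultimately show ?thesis using Pv_ne0[OF t] Qv_ne0[OF t] proj_sc by (simp add: u_hom[OF t])
qed

definition sig :: "param \<Rightarrow> param" where
  "sig m = (case snd m of None \<Rightarrow> (fst m, Some 0) | Some a \<Rightarrow> (fst m, Some (1 / cnj a)))"

lemma sig_props:
  assumes t: "t \<noteq> 0" and m: "m \<in> Mminus"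
  shows "sig m \<in> Mplus" "uM t m = prod.swap (uM t (sig m))"
proof -
  obtain d q where md: "m = (d, q)" by fastforce
  have "sig m \<in> Mplus \<and> uM t m = prod.swap (uM t (sig m))"
  proof (cases q)
    case None
    thus ?thesis by (auto simp: md sig_def Mplus_def uM_def)
  next
    case (Some a)
    hence a: "cmod a > 1" using m md by (auto simp: Mminus_def)
    hence a0: "a \<noteq> 0" by auto
    have "sig m \<in> Mplus" using Some a by (simp add: md sig_def Mplus_def norm_divide divide_less_eq)
    moreover have "uM t m = prod.swap (uM t (sig m))" using Some u_swap[OF t a0] by (simp add: md sig_def)
    ultimately show ?thesis by blast
  qed
  thus "sig m \<in> Mplus" "uM t m = prod.swap (uM t (sig m))" by blast+
qed

lemma sig_inj: "inj_on sig Mminus"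
proof (rule inj_onI)
  fix m m' assume "m \<in> Mminus" "m' \<in> Mminus" "sig m = sig m'"
  thus "m = m'"
    by (cases m; cases m'; auto simp: Mminus_def sig_def split: option.splits)
qed

lemma sig_onto: "Mplus \<subseteq> sig ` Mminus"
proof
  fix p assume "p \<in> Mplus"
  then obtain d b where p: "p = (d, Some b)" "cmod b < 1" by (auto simp: Mplus_def)
  show "p \<in> sig ` Mminus"
  proof (cases "b = 0")
    case True
    hence "p = sig (d, None)" "(d, None) \<in> Mminus" by (auto simp: p sig_def Mminus_def)
    thus ?thesis by blast
  next
    case False
    have "p = sig (d, Some (1 / cnj b))" using False by (simp add: p sig_def)
    moreover have "(d, Some (1 / cnj b)) \<in> Mminus" using False p(2)
      by (simp add: Mminus_def norm_divide less_divide_eq)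
    ultimately show ?thesis by blast
  qed
qed

lemma bij_Mplus: "t \<noteq> 0 \<Longrightarrow> bij_betw (uM t) Mplus (UNIV - Diag)"
  unfolding bij_betw_def
proof (intro conjI u_inj_Mplus equalityI subsetI)
  fix p assume "t \<noteq> 0" "p \<in> uM t ` Mplus"
  thus "p \<in> UNIV - Diag" using Mplus_notdiag by blast
next
  fix p assume t: "t \<noteq> 0" and "p \<in> UNIV - Diag"
  then obtain x y where p: "p = (x, y)" "x \<noteq> y" by (cases p) (auto simp: Diag_def)
  obtain m where "m \<in> Mplus" "uM t m = (x, y)" using surj_core[OF t p(2)] by blast
  thus "p \<in> uM t ` Mplus" using p(1) by (metis image_eqI)
qed

lemma bij_Mminus:
  assumes t: "t \<noteq> 0" shows "bij_betw (uM t) Mminus (UNIV - Diag)"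
proof -
  have inj: "inj_on (uM t) Mminus"
  proof (rule inj_onI)
    fix m m' assume m: "m \<in> Mminus" "m' \<in> Mminus" "uM t m = uM t m'"
    hence "uM t (sig m) = uM t (sig m')" using sig_props[OF t] by (metis swap_swap)
    hence "sig m = sig m'" using u_inj_Mplus[OF t] sig_props[OF t] m by (meson inj_onD)
    thus "m = m'" using sig_inj m by (meson inj_onD)
  qed
  have "uM t ` Mminus = prod.swap ` uM t ` sig ` Mminus"
    using sig_props[OF t] by (force simp: image_iff)
  also have "sig ` Mminus = Mplus" using sig_onto sig_props[OF t] by blast
  also have "uM t ` Mplus = UNIV - Diag" using bij_Mplus[OF t] by (simp add: bij_betw_def)
  also have "prod.swap ` (UNIV - Diag) = UNIV - Diag"
    by (force simp: Diag_def image_iff)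
  finally show ?thesis using inj by (simp add: bij_betw_def)
qed


lemma cover: "m \<in> Mplus \<or> m \<in> Kset \<or> m \<in> Mminus"
proof -
  obtain d q where md: "m = (d, q)" by fastforce
  show ?thesis
  proof (cases q)
    case None thus ?thesis by (simp add: md Mminus_def)
  next
    case (Some a)
    thus ?thesis by (cases "cmod a < 1"; cases "cmod a = 1") (auto simp: md Mplus_def Kset_def Mminus_def)
  qed
qed

theorem lemma2p4:
  fixes t :: complex
  assumes "t \<noteq> 0"
  shows "surj (uM t)
    \<and> uM t ` Kset = Diag \<and> uM t -` Diag = Kset
    \<and> diffeo_onto M_atlas X_atlas Mplus (UNIV - Diag) (uM t)
    \<and> diffeo_onto M_atlas X_atlas Mminus (UNIV - Diag) (uM t)"
proof -
  note t = assms
  have bp: "bij_betw (uM t) Mplus (UNIV - Diag)" by (rule bij_Mplus[OF t])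
  have bm: "bij_betw (uM t) Mminus (UNIV - Diag)" by (rule bij_Mminus[OF t])
  have KD: "uM t ` Kset = Diag"
  proof
    show "uM t ` Kset \<subseteq> Diag" using K_diag[OF t] by blast
    show "Diag \<subseteq> uM t ` Kset"
    proof
      fix p assume "p \<in> Diag"
      then obtain x where p: "p = (x, x)" by (auto simp: Diag_def)
      obtain m where "m \<in> Kset" "uM t m = (x, x)" using diag_K[OF t] by blast
      thus "p \<in> uM t ` Kset" using p by (metis image_eqI)
    qed
  qed
  have swapD: "prod.swap p \<in> Diag \<longleftrightarrow> p \<in> Diag" for p :: "sphere \<times> sphere"
    by (cases p) (auto simp: Diag_def)
  have pre: "uM t -` Diag = Kset"
  proof
    show "uM t -` Diag \<subseteq> Kset"
    proof
      fix m assume m: "m \<in> uM t -` Diag"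
      have "m \<notin> Mplus" using Mplus_notdiag[OF t] m by blast
      moreover have "m \<notin> Mminus"
      proof
        assume mm: "m \<in> Mminus"
        hence "uM t (sig m) \<notin> Diag" using Mplus_notdiag[OF t] sig_props[OF t] by blast
        thus False using sig_props(2)[OF t mm] m swapD by auto
      qed
      ultimately show "m \<in> Kset" using cover by blast
    qed
    show "Kset \<subseteq> uM t -` Diag" using K_diag[OF t] by blast
  qed
  have su: "surj (uM t)"
  proof -
    have "UNIV \<subseteq> uM t ` Kset \<union> uM t ` Mplus" using KD bp by (auto simp: bij_betw_def)
    thus ?thesis by blast
  qed
  have dp: "diffeo_onto M_atlas X_atlas Mplus (UNIV - Diag) (uM t)"
    using bp sm_Mplus[OF t] by (simp add: diffeo_onto_def bij_betw_def)
  have dm: "diffeo_onto M_atlas X_atlas Mminus (UNIV - Diag) (uM t)"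
    using bm sm_Mminus[OF t] by (simp add: diffeo_onto_def bij_betw_def)
  show ?thesis using su KD pre dp dm by blast
qed

end
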